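(* Let $N\geq1$ and let $r$ be an integer with $-(N-1)\leq r\leq N-1$, $r\neq\pm(N-2)$, and $r\neq 4-N$. Let $\hat\rho$ be an $N$-qubit state with Dyson's rank at most $r$, and let $\mathbf n,\mathbf m\in\mathbb R^3$ be orthogonal unit vectors with $\langle\hat J_{\mathbf m}\rangle_{\hat\rho}\neq0$. Then the spin-squeezing coefficient $\xi^2=N(\Delta\hat J_{\mathbf n})^2_{\hat\rho}/\langle\hat J_{\mathbf m}\rangle_{\hat\rho}^2$ satisfies $$\xi^2\geq\frac{8N}{(N+r)^2+12N-1}.$$
   Context: Consider $N$ qubits labelled $1,\dots,N$. For a unit vector $\mathbf n\in\mathbb R^3$, $\hat J_{\mathbf n}=\frac12\sum_{i=1}^N \mathbf n\cdot\hat{\boldsymbol\sigma}^{(i)}$ with $\hat{\boldsymbol\sigma}^{(i)}$ the vector of Pauli matrices of qubit $i$; $(\Delta\hat A)^2_{\hat\rho}=\mathrm{Tr}(\hat\rho\hat A^2)-\mathrm{Tr}(\hat\rho\hat A)^2$ and $\langle\hat A\rangle_{\hat\rho}=\mathrm{Tr}(\hat\rho\hat A)$. A partition $\Lambda=\{A_1,\dots,A_{|\Lambda|}\}$ of $\{1,\dots,N\}$ into nonempty disjoint subsets has subset sizes $N_l=|A_l|$ and $\max\Lambda=\max_lN_l$. A state is $\Lambda$-separable if it equals $\sum_\gamma p_\gamma\hat\rho^{(\gamma)}_{A_1}\otimes\cdots\otimes\hat\rho^{(\gamma)}_{A_{|\Lambda|}}$ for a probability distribution $p_\gamma$ and states $\hat\rho^{(\gamma)}_{A_l}$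 of the qubits in $A_l$. A state has Dyson's rank at most $r$ if it is a convex combination of $\Lambda$-separable states over partitions $\Lambda$ with $\max\Lambda-|\Lambda|\leq r$. *)

theory Defs
  imports "HOL-Analysis.Analysis" "HOL-Library.Disjoint_Sets"
begin

text \<open>Computational basis configurations of the qubits in a set A of labels:
  a configuration assigns a bit to each qubit (False = |0>, True = |1>,
  where |0> is the +1 eigenvector of sigma_z), and is False outside A.\<close>
definition cfgs :: "nat set \<Rightarrow> (nat \<Rightarrow> bool) set" where
  "cfgs A = {x. \<forall>i. i \<notin> A \<longrightarrow> \<not> x i}"

text \<open>Operators on the qubits of A: matrices indexed by configurations in cfgs A.\<close>
type_synonym op = "(nat \<Rightarrow> bool) \<Rightarrow> (nat \<Rightarrow> bool) \<Rightarrow> complex"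

definition restr :: "nat set \<Rightarrow> (nat \<Rightarrow> bool) \<Rightarrow> (nat \<Rightarrow> bool)" where
  "restr A x = (\<lambda>i. i \<in> A \<and> x i)"

definition op_mult :: "nat set \<Rightarrow> op \<Rightarrow> op \<Rightarrow> op" where
  "op_mult A P Q = (\<lambda>x y. \<Sum>z\<in>cfgs A. P x z * Q z y)"

definition op_trace :: "nat set \<Rightarrow> op \<Rightarrow> complex" where
  "op_trace A P = (\<Sum>x\<in>cfgs A. P x x)"

definition is_state :: "nat set \<Rightarrow> op \<Rightarrow> bool" where
  "is_state A \<rho> \<longleftrightarrow>
     (\<forall>x\<in>cfgs A. \<forall>y\<in>cfgs A. \<rho> x y = cnj (\<rho> y x)) \<and>
     (\<forall>v :: (nat \<Rightarrow> bool) \<Rightarrow> complex.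
        0 \<le> Re (\<Sum>x\<in>cfgs A. \<Sum>y\<in>cfgs A. cnj (v x) * \<rho> x y * v y)) \<and>
     op_trace A \<rho> = 1"

definition tensor_prod :: "nat set set \<Rightarrow> (nat set \<Rightarrow> op) \<Rightarrow> op" where
  "tensor_prod \<Lambda> \<sigma> = (\<lambda>x y. \<Prod>B\<in>\<Lambda>. \<sigma> B (restr B x) (restr B y))"

definition is_partition :: "nat \<Rightarrow> nat set set \<Rightarrow> bool" where
  "is_partition N \<Lambda> \<longleftrightarrow> partition_on {1..N} \<Lambda>"

definition separable :: "nat \<Rightarrow> nat set set \<Rightarrow> op \<Rightarrow> bool" where
  "separable N \<Lambda> \<rho> \<longleftrightarrow>
     (\<exists>(K::nat) (p::nat \<Rightarrow> real) (\<sigma>::nat \<Rightarrow> nat set \<Rightarrow> op).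
        (\<forall>k<K. 0 \<le> p k) \<and> (\<Sum>k<K. p k) = 1 \<and>
        (\<forall>k<K. \<forall>B\<in>\<Lambda>. is_state B (\<sigma> k B)) \<and>
        (\<forall>x\<in>cfgs {1..N}. \<forall>y\<in>cfgs {1..N}.
            \<rho> x y = (\<Sum>k<K. complex_of_real (p k) * tensor_prod \<Lambda> (\<sigma> k) x y)))"

definition dyson_part :: "nat set set \<Rightarrow> int" where
  "dyson_part \<Lambda> = int (Max (card ` \<Lambda>)) - int (card \<Lambda>)"

definition dyson_rank_le :: "nat \<Rightarrow> int \<Rightarrow> op \<Rightarrow> bool" where
  "dyson_rank_le N r \<rho> \<longleftrightarrow>
     (\<exists>(K::nat) (q::nat \<Rightarrow> real) (\<Lambda>::nat \<Rightarrow> nat set set) (\<rho>s::nat \<Rightarrow> op).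
        (\<forall>k<K. 0 \<le> q k) \<and> (\<Sum>k<K. q k) = 1 \<and>
        (\<forall>k<K. is_partition N (\<Lambda> k) \<and> dyson_part (\<Lambda> k) \<le> r \<and>
               separable N (\<Lambda> k) (\<rho>s k)) \<and>
        (\<forall>x\<in>cfgs {1..N}. \<forall>y\<in>cfgs {1..N}.
            \<rho> x y = (\<Sum>k<K. complex_of_real (q k) * \<rho>s k x y)))"

text \<open>Single-qubit matrix element <a| n.sigma |b>.\<close>
definition pauli_n :: "real^3 \<Rightarrow> bool \<Rightarrow> bool \<Rightarrow> complex" where
  "pauli_n n a b =
     (if \<not> a \<and> \<not> b then complex_of_real (n$3)
      else if a \<and> b then - complex_of_real (n$3)
      else if \<not> a \<and> b then Complex (n$1) (- (n$2))
      else Complex (n$1) (n$2))"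

text \<open>Collective spin J_n = 1/2 sum_{i=1..N} n.sigma^(i) on N qubits.\<close>
definition J_op :: "nat \<Rightarrow> real^3 \<Rightarrow> op" where
  "J_op N n = (\<lambda>x y. (1/2) * (\<Sum>i\<in>{1..N}.
      pauli_n n (x i) (y i) * (if (\<forall>j\<in>{1..N}. j \<noteq> i \<longrightarrow> x j = y j) then 1 else 0)))"

text \<open>Expectation Tr(rho A) (real for Hermitian rho, A) and variance.\<close>
definition expect :: "nat \<Rightarrow> op \<Rightarrow> op \<Rightarrow> real" where
  "expect N \<rho> A = Re (op_trace {1..N} (op_mult {1..N} \<rho> A))"

definition variance :: "nat \<Rightarrow> op \<Rightarrow> op \<Rightarrow> real" where
  "variance N \<rho> A = expect N \<rho> (op_mult {1..N} A A) - (expect N \<rho> A)^2"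

end

theory Submission
  imports Defs
begin

lemma finite_cfgs: "finite A \<Longrightarrow> finite (cfgs A)"
proof -
  assume "finite A"
  have "cfgs A \<subseteq> (\<lambda>S i. i \<in> S) ` Pow A"
  proof
    fix x assume "x \<in> cfgs A"
    then have "x = (\<lambda>i. i \<in> {j. x j})" "{j. x j} \<in> Pow A" by (auto simp: cfgs_def)
    then show "x \<in> (\<lambda>S i. i \<in> S) ` Pow A" by blast
  qed
  then show ?thesis using \<open>finite A\<close> by (meson finite_Pow_iff finite_imageI finite_subset)
qed

lemma cfgs_empty: "cfgs {} = {\<lambda>_. False}"
  by (auto simp: cfgs_def)

lemma cfgs_insert_bij:
  assumes "a \<notin> A"
  shows "bij_betw (\<lambda>(b, x). x(a := b)) (UNIV \<times> cfgs A) (cfgs (insert a A))"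
  unfolding bij_betw_def
proof
  show "inj_on (\<lambda>(b, x). x(a := b)) (UNIV \<times> cfgs A)"
  proof (rule inj_onI, clarify)
    fix b x c y assume "x \<in> cfgs A" "y \<in> cfgs A" "x(a := b) = y(a := c)"
    then have 1: "b = c" by (metis fun_upd_same)
    have "x i = y i" for i
    proof (cases "i = a")
      case True
      then show ?thesis using assms \<open>x \<in> cfgs A\<close> \<open>y \<in> cfgs A\<close> by (simp add: cfgs_def)
    next
      case False
      then show ?thesis using \<open>x(a := b) = y(a := c)\<close> by (metis fun_upd_other)
    qed
    then show "b = c \<and> x = y" using 1 by auto
  qed
  show "(\<lambda>(b, x). x(a := b)) ` (UNIV \<times> cfgs A) = cfgs (insert a A)"
  proof
    show "(\<lambda>(b, x). x(a := b)) ` (UNIV \<times> cfgs A) \<subseteq> cfgs (insert a A)"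
      by (auto simp: cfgs_def)
    show "cfgs (insert a A) \<subseteq> (\<lambda>(b, x). x(a := b)) ` (UNIV \<times> cfgs A)"
    proof
      fix z assume z: "z \<in> cfgs (insert a A)"
      have "z = (z(a := False))(a := z a)" by simp
      moreover have "z(a := False) \<in> cfgs A" using z by (auto simp: cfgs_def)
      ultimately show "z \<in> (\<lambda>(b, x). x(a := b)) ` (UNIV \<times> cfgs A)"
        by (intro image_eqI[where x="(z a, z(a := False))"]) auto
    qed
  qed
qed

lemma sum_prod_cfgs:
  fixes f :: "nat \<Rightarrow> bool \<Rightarrow> 'c::comm_semiring_1"
  assumes "finite A"
  shows "(\<Sum>x\<in>cfgs A. \<Prod>i\<in>A. f i (x i)) = (\<Prod>i\<in>A. f i False + f i True)"
  using assms
proof (induction A rule: finite_induct)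
  case empty
  then show ?case by (simp add: cfgs_empty)
next
  case (insert a A)
  have "(\<Sum>x\<in>cfgs (insert a A). \<Prod>i\<in>insert a A. f i (x i))
      = (\<Sum>p\<in>UNIV \<times> cfgs A. (\<Prod>i\<in>insert a A. f i ((\<lambda>(b, x). x(a := b)) p i)))"
    using sum.reindex_bij_betw[OF cfgs_insert_bij[OF insert(2)], symmetric] by simp
  also have "\<dots> = (\<Sum>p\<in>UNIV \<times> cfgs A. f a (fst p) * (\<Prod>i\<in>A. f i (snd p i)))"
  proof (rule sum.cong[OF refl])
    fix p :: "bool \<times> (nat \<Rightarrow> bool)" assume "p \<in> UNIV \<times> cfgs A"
    obtain b :: bool and x where p: "p = (b, x)" by fastforce
    have "(\<Prod>i\<in>A. f i ((x(a := b)) i)) = (\<Prod>i\<in>A. f i (x i))"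
      using insert(2) by (intro prod.cong) auto
    then show "(\<Prod>i\<in>insert a A. f i ((\<lambda>(b, x). x(a := b)) p i)) = f a (fst p) * (\<Prod>i\<in>A. f i (snd p i))"
      using insert by (simp add: p)
  qed
  also have "\<dots> = (\<Sum>b\<in>UNIV. \<Sum>x\<in>cfgs A. f a b * (\<Prod>i\<in>A. f i (x i)))"
    by (subst sum.cartesian_product) (simp add: case_prod_beta)
  also have "\<dots> = (\<Sum>b\<in>UNIV. f a b * (\<Sum>x\<in>cfgs A. \<Prod>i\<in>A. f i (x i)))"
    by (simp add: sum_distrib_left)
  also have "\<dots> = (f a False + f a True) * (\<Prod>i\<in>A. f i False + f i True)"
    using insert by (simp add: UNIV_bool distrib_right)
  finally show ?case using insert by simp
qed

definition merge :: "(nat \<Rightarrow> bool) \<Rightarrow> (nat \<Rightarrow> bool) \<Rightarrow> (nat \<Rightarrow> bool)" where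
  "merge y z = (\<lambda>i. y i \<or> z i)"

lemma merge_bij:
  assumes "A \<inter> C = {}"
  shows "bij_betw (\<lambda>(y, z). merge y z) (cfgs A \<times> cfgs C) (cfgs (A \<union> C))"
  unfolding bij_betw_def
proof
  show "inj_on (\<lambda>(y, z). merge y z) (cfgs A \<times> cfgs C)"
  proof (rule inj_onI, clarify)
    fix y z y' z' assume h: "y \<in> cfgs A" "z \<in> cfgs C" "y' \<in> cfgs A" "z' \<in> cfgs C"
      "merge y z = merge y' z'"
    have "y i = y' i \<and> z i = z' i" for i
    proof -
      have "y i \<or> z i \<longleftrightarrow> y' i \<or> z' i" using h(5) unfolding merge_def by metis
      then show ?thesis using h(1-4) assms unfolding cfgs_def by blast
    qed
    then show "y = y' \<and> z = z'" by auto
  qed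
  show "(\<lambda>(y, z). merge y z) ` (cfgs A \<times> cfgs C) = cfgs (A \<union> C)"
  proof
    show "(\<lambda>(y, z). merge y z) ` (cfgs A \<times> cfgs C) \<subseteq> cfgs (A \<union> C)"
      by (auto simp: cfgs_def merge_def)
    show "cfgs (A \<union> C) \<subseteq> (\<lambda>(y, z). merge y z) ` (cfgs A \<times> cfgs C)"
    proof
      fix x assume x: "x \<in> cfgs (A \<union> C)"
      have 1: "x = merge (restr A x) (restr C x)"
        using x by (auto simp: cfgs_def merge_def restr_def)
      have 2: "(restr A x, restr C x) \<in> cfgs A \<times> cfgs C"
        by (auto simp: cfgs_def restr_def)
      show "x \<in> (\<lambda>(y, z). merge y z) ` (cfgs A \<times> cfgs C)"
        using 1 2 by (intro image_eqI[where x="(restr A x, restr C x)"]) auto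
    qed
  qed
qed

lemma sum_merge:
  assumes "A \<inter> C = {}" "finite A" "finite C"
  shows "(\<Sum>x\<in>cfgs (A \<union> C). g x) = (\<Sum>y\<in>cfgs A. \<Sum>z\<in>cfgs C. g (merge y z))"
proof -
  have "(\<Sum>x\<in>cfgs (A \<union> C). g x) = (\<Sum>p\<in>cfgs A \<times> cfgs C. g ((\<lambda>(y, z). merge y z) p))"
    using sum.reindex_bij_betw[OF merge_bij[OF assms(1)], symmetric] by simp
  also have "\<dots> = (\<Sum>y\<in>cfgs A. \<Sum>z\<in>cfgs C. g (merge y z))"
    by (subst sum.cartesian_product) (simp add: case_prod_beta)
  finally show ?thesis .
qed

lemma restr_cfgs: "restr B x \<in> cfgs B"
  by (auto simp: restr_def cfgs_def)

lemma restr_id: "x \<in> cfgs B \<Longrightarrow> restr B x = x"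
  by (auto simp: restr_def cfgs_def)

lemma sum_prod_blocks:
  fixes f :: "nat set \<Rightarrow> (nat \<Rightarrow> bool) \<Rightarrow> 'c::comm_semiring_1"
  assumes "finite L" "\<forall>B\<in>L. finite B" "\<forall>B\<in>L. \<forall>B'\<in>L. B \<noteq> B' \<longrightarrow> B \<inter> B' = {}"
  shows "(\<Sum>x\<in>cfgs (\<Union>L). \<Prod>B\<in>L. f B (restr B x)) = (\<Prod>B\<in>L. \<Sum>y\<in>cfgs B. f B y)"
  using assms
proof (induction L rule: finite_induct)
  case empty
  then show ?case by (simp add: cfgs_empty)
next
  case (insert B0 L)
  let ?U = "\<Union>L"
  have fin: "\<forall>B\<in>L. finite B" using insert.prems(1) by blast
  have dis: "\<forall>B\<in>L. \<forall>B'\<in>L. B \<noteq> B' \<longrightarrow> B \<inter> B' = {}" using insert.prems(2) by blast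
  have IH: "(\<Sum>x\<in>cfgs ?U. \<Prod>B\<in>L. f B (restr B x)) = (\<Prod>B\<in>L. \<Sum>y\<in>cfgs B. f B y)"
    using insert.IH fin dis by blast
  have d0: "\<forall>B\<in>L. B0 \<inter> B = {}"
  proof
    fix B assume "B \<in> L"
    then have "B0 \<noteq> B" using insert.hyps(2) by auto
    then show "B0 \<inter> B = {}" using insert.prems(2) \<open>B \<in> L\<close> by simp
  qed
  have disj: "B0 \<inter> ?U = {}" using d0 by auto
  have finU: "finite ?U" using fin insert.hyps(1) by simp
  have fin0: "finite B0" using insert.prems(1) by simp
  have U: "\<Union>(insert B0 L) = B0 \<union> ?U" by simp
  have "(\<Sum>x\<in>cfgs (\<Union>(insert B0 L)). \<Prod>B\<in>insert B0 L. f B (restr B x))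
      = (\<Sum>y\<in>cfgs B0. \<Sum>z\<in>cfgs ?U. \<Prod>B\<in>insert B0 L. f B (restr B (merge y z)))"
    unfolding U by (rule sum_merge[OF disj fin0 finU])
  also have "\<dots> = (\<Sum>y\<in>cfgs B0. \<Sum>z\<in>cfgs ?U. f B0 y * (\<Prod>B\<in>L. f B (restr B z)))"
  proof (intro sum.cong refl)
    fix y z assume y: "y \<in> cfgs B0" and z: "z \<in> cfgs ?U"
    have r0: "restr B0 (merge y z) = y"
    proof
      fix i show "restr B0 (merge y z) i = y i"
        using y z disj unfolding restr_def merge_def cfgs_def by blast
    qed
    have rB: "restr B (merge y z) = restr B z" if "B \<in> L" for B
    proof
      fix i show "restr B (merge y z) i = restr B z i"
        using y that disj unfolding restr_def merge_def cfgs_def by blast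
    qed
    have "(\<Prod>B\<in>insert B0 L. f B (restr B (merge y z))) = f B0 (restr B0 (merge y z)) * (\<Prod>B\<in>L. f B (restr B (merge y z)))"
      by (rule prod.insert[OF insert.hyps(1,2)])
    also have "\<dots> = f B0 y * (\<Prod>B\<in>L. f B (restr B z))"
      using r0 rB by (metis (no_types, lifting) prod.cong)
    finally show "(\<Prod>B\<in>insert B0 L. f B (restr B (merge y z))) = f B0 y * (\<Prod>B\<in>L. f B (restr B z))" .
  qed
  also have "\<dots> = (\<Sum>y\<in>cfgs B0. f B0 y) * (\<Sum>z\<in>cfgs ?U. \<Prod>B\<in>L. f B (restr B z))"
    by (simp only: sum_product)
  also have "\<dots> = (\<Prod>B\<in>insert B0 L. \<Sum>y\<in>cfgs B. f B y)"
    unfolding IH by (rule prod.insert[OF insert.hyps(1,2), symmetric])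
  finally show ?case .
qed

lemma comps:
  fixes n :: "real^3"
  shows "n \<bullet> m = n$1 * m$1 + n$2 * m$2 + n$3 * m$3"
  by (simp add: inner_vec_def sum_3)

lemma unitary2:
  fixes a b c d A B C D :: complex
  assumes "A * a + B * b = 1" "C * c + D * d = 1" "A * c + B * d = 0" "C * a + D * b = 0"
  shows "a * A + c * C = 1" "b * B + d * D = 1" "a * B + c * D = 0" "b * A + d * C = 0"
  using assms by algebra+

definition sg :: "bool \<Rightarrow> complex" where "sg b = (if b then -1 else 1)"

lemma pauli_sq:
  fixes n :: "real^3"
  assumes "norm n = 1"
  shows "pauli_n n a False * pauli_n n False b + pauli_n n a True * pauli_n n True b = (if a = b then 1 else 0)"
proof -
  have h: "n$1 * n$1 + n$2 * n$2 + n$3 * n$3 = 1" using assms by (simp add: norm_eq_1 comps[symmetric])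
  have h': "complex_of_real (n$1) * of_real (n$1) + of_real (n$2) * of_real (n$2) + of_real (n$3) * of_real (n$3) = 1"
    by (metis h of_real_1 of_real_add of_real_mult)
  have i: "\<i> * \<i> = -1" by simp
  show ?thesis
    using h' i apply (cases a; cases b)
    apply (simp_all add: pauli_n_def Complex_eq)
    apply (insert h' i; algebra)+
    done
qed

lemma qubit_basis_pos:
  fixes n m :: "real^3"
  assumes nn: "norm n = 1" and mm: "norm m = 1" and nm: "n \<bullet> m = 0" and n3: "n$3 \<ge> 0"
  shows "\<exists>U::bool \<Rightarrow> bool \<Rightarrow> complex.
     (\<forall>a b. pauli_n n a False * U False b + pauli_n n a True * U True b = sg b * U a b) \<and>
     (\<forall>a b. pauli_n m a False * U False b + pauli_n m a True * U True b = U a (\<not> b)) \<and>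
     (\<forall>a a'. U a False * cnj (U a' False) + U a True * cnj (U a' True) = (if a = a' then 1 else 0))"
proof -
  define s where "s = sqrt ((1 + n$3) / 2)"
  have s0: "s > 0" using n3 by (simp add: s_def)
  have ss: "s * s = (1 + n$3) / 2" using n3 by (simp add: s_def)
  define t where "t = 1 / (2 * s)"
  have st: "2 * s * t = 1" using s0 by (simp add: t_def)
  define N1 where "N1 = complex_of_real (n$1)"
  define N2 where "N2 = complex_of_real (n$2)"
  define N3 where "N3 = complex_of_real (n$3)"
  define M1 where "M1 = complex_of_real (m$1)"
  define M2 where "M2 = complex_of_real (m$2)"
  define M3 where "M3 = complex_of_real (m$3)"
  define S where "S = complex_of_real s"
  define T where "T = complex_of_real t"
  have hn: "N1 * N1 + N2 * N2 + N3 * N3 = 1"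
  proof -
    have "n$1 * n$1 + n$2 * n$2 + n$3 * n$3 = 1" using nn by (simp add: norm_eq_1 comps[symmetric])
    then show ?thesis unfolding N1_def N2_def N3_def by (metis of_real_1 of_real_add of_real_mult)
  qed
  have hm: "M1 * M1 + M2 * M2 + M3 * M3 = 1"
  proof -
    have "m$1 * m$1 + m$2 * m$2 + m$3 * m$3 = 1" using mm by (simp add: norm_eq_1 comps[symmetric])
    then show ?thesis unfolding M1_def M2_def M3_def by (metis of_real_1 of_real_add of_real_mult)
  qed
  have hnm: "N1 * M1 + N2 * M2 + N3 * M3 = 0"
  proof -
    have "n$1 * m$1 + n$2 * m$2 + n$3 * m$3 = 0" using nm by (simp add: comps)
    then show ?thesis unfolding N1_def N2_def N3_def M1_def M2_def M3_def by (metis of_real_0 of_real_add of_real_mult)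
  qed
  have hs: "S * S = (1 + N3) / 2" unfolding S_def N3_def using ss
    by (metis of_real_1 of_real_add of_real_divide of_real_mult of_real_numeral)
  have hst: "2 * S * T = 1" unfolding S_def T_def using st
    by (metis of_real_1 of_real_mult of_real_numeral)
  have i: "\<i> * \<i> = -1" by simp
  have pn: "pauli_n n = (\<lambda>a b. if \<not> a \<and> \<not> b then N3 else if a \<and> b then - N3
      else if \<not> a \<and> b then N1 - \<i> * N2 else N1 + \<i> * N2)"
    by (auto simp: pauli_n_def N1_def N2_def N3_def Complex_eq fun_eq_iff)
  have pm: "pauli_n m = (\<lambda>a b. if \<not> a \<and> \<not> b then M3 else if a \<and> b then - M3
      else if \<not> a \<and> b then M1 - \<i> * M2 else M1 + \<i> * M2)"
    by (auto simp: pauli_n_def M1_def M2_def M3_def Complex_eq fun_eq_iff)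
  have cj: "cnj N1 = N1" "cnj N2 = N2" "cnj N3 = N3" "cnj M1 = M1" "cnj M2 = M2" "cnj M3 = M3"
    "cnj S = S" "cnj T = T"
    by (simp_all add: N1_def N2_def N3_def M1_def M2_def M3_def S_def T_def)
  define vF where "vF = S"
  define vT where "vT = (N1 + \<i> * N2) * T"
  define wF where "wF = M3 * vF + (M1 - \<i> * M2) * vT"
  define wT where "wT = (M1 + \<i> * M2) * vF - M3 * vT"
  define U where "U = (\<lambda>a b. if b then (if a then wT else wF) else (if a then vT else vF))"
  have e1: "N3 * vF + (N1 - \<i> * N2) * vT = vF"
    unfolding vF_def vT_def using hn hs hst i by algebra
  have e2: "(N1 + \<i> * N2) * vF - N3 * vT = vT"
    unfolding vF_def vT_def using hn hs hst i by algebra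
  have e3: "N3 * wF + (N1 - \<i> * N2) * wT = - wF"
    unfolding wF_def wT_def vF_def vT_def using hn hm hnm hs hst i by algebra
  have e4: "(N1 + \<i> * N2) * wF - N3 * wT = - wT"
    unfolding wF_def wT_def vF_def vT_def using hn hm hnm hs hst i by algebra
  have e5: "M3 * wF + (M1 - \<i> * M2) * wT = vF"
    unfolding wF_def wT_def using hm i by algebra
  have e6: "(M1 + \<i> * M2) * wF - M3 * wT = vT"
    unfolding wF_def wT_def using hm i by algebra
  have cvF: "cnj vF = S" and cvT: "cnj vT = (N1 - \<i> * N2) * T"
    unfolding vF_def vT_def using cj by simp_all
  have cwF: "cnj wF = M3 * S + (M1 + \<i> * M2) * ((N1 - \<i> * N2) * T)"
    unfolding wF_def vF_def vT_def using cj by simp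
  have cwT: "cnj wT = (M1 - \<i> * M2) * S - M3 * ((N1 - \<i> * N2) * T)"
    unfolding wT_def vF_def vT_def using cj by simp
  have o1: "cnj vF * vF + cnj vT * vT = 1"
    unfolding cvF cvT unfolding vF_def vT_def using hn hs hst i by algebra
  have o2: "cnj wF * wF + cnj wT * wT = 1"
    unfolding cwF cwT unfolding wF_def wT_def vF_def vT_def using hn hm hnm hs hst i by algebra
  have o3: "cnj vF * wF + cnj vT * wT = 0"
    unfolding cvF cvT unfolding wF_def wT_def vF_def vT_def using hn hm hnm hs hst i by algebra
  have o4: "cnj wF * vF + cnj wT * vT = 0"
    unfolding cwF cwT unfolding wF_def wT_def vF_def vT_def using hn hm hnm hs hst i by algebra
  note u = unitary2[OF o1 o2 o3 o4]
  show ?thesis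
  proof (intro exI[of _ U] conjI allI)
    fix a b
    show "pauli_n n a False * U False b + pauli_n n a True * U True b = sg b * U a b"
      unfolding pn U_def sg_def using e1 e2 e3 e4 by (cases a; cases b) simp_all
    show "pauli_n m a False * U False b + pauli_n m a True * U True b = U a (\<not> b)"
      unfolding pm U_def using e5 e6 wF_def wT_def by (cases a; cases b) simp_all
  next
    fix a a'
    show "U a False * cnj (U a' False) + U a True * cnj (U a' True) = (if a = a' then 1 else 0)"
      unfolding U_def using u by (cases a; cases a') (simp_all add: mult.commute)
  qed
qed

lemma pauli_neg: "pauli_n (-n) a b = - pauli_n n a b"
  by (simp add: pauli_n_def complex_eq_iff)

lemma qubit_basis:
  fixes n m :: "real^3"
  assumes nn: "norm n = 1" and mm: "norm m = 1" and nm: "n \<bullet> m = 0"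
  shows "\<exists>U::bool \<Rightarrow> bool \<Rightarrow> complex.
     (\<forall>a b. pauli_n n a False * U False b + pauli_n n a True * U True b = sg b * U a b) \<and>
     (\<forall>a b. pauli_n m a False * U False b + pauli_n m a True * U True b = U a (\<not> b)) \<and>
     (\<forall>a a'. U a False * cnj (U a' False) + U a True * cnj (U a' True) = (if a = a' then 1 else 0))"
proof (cases "n$3 \<ge> 0")
  case True
  then show ?thesis using qubit_basis_pos[OF assms] by blast
next
  case False
  have "norm (-n) = 1" "(-n) \<bullet> m = 0" "(-n)$3 \<ge> 0" using nn nm False by auto
  then obtain U where U: "\<forall>a b. pauli_n (-n) a False * U False b + pauli_n (-n) a True * U True b = sg b * U a b"
     "\<forall>a b. pauli_n m a False * U False b + pauli_n m a True * U True b = U a (\<not> b)"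
     "\<forall>a a'. U a False * cnj (U a' False) + U a True * cnj (U a' True) = (if a = a' then 1 else 0)"
    using qubit_basis_pos[OF _ mm] by blast
  define V where "V = (\<lambda>a b. U a (\<not> b))"
  have 1: "pauli_n n a False * V False b + pauli_n n a True * V True b = sg b * V a b" for a b
  proof -
    have "pauli_n (-n) a False * U False (\<not> b) + pauli_n (-n) a True * U True (\<not> b) = sg (\<not> b) * U a (\<not> b)"
      using U(1) by blast
    then have "- (pauli_n n a False * U False (\<not> b) + pauli_n n a True * U True (\<not> b)) = sg (\<not> b) * U a (\<not> b)"
      unfolding pauli_neg by simp
    then have "pauli_n n a False * U False (\<not> b) + pauli_n n a True * U True (\<not> b) = - sg (\<not> b) * U a (\<not> b)"
      by (metis minus_minus mult_minus_left)
    then show ?thesis unfolding V_def sg_def by (cases b) simp_all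
  qed
  have 2: "pauli_n m a False * V False b + pauli_n m a True * V True b = V a (\<not> b)" for a b
    using U(2) unfolding V_def by simp
  have 3: "V a False * cnj (V a' False) + V a True * cnj (V a' True) = (if a = a' then 1 else 0)" for a a'
    using U(3) unfolding V_def by (simp add: add.commute)
  show ?thesis using 1 2 3 by blast
qed

definition ev :: "(bool \<Rightarrow> bool \<Rightarrow> complex) \<Rightarrow> nat set \<Rightarrow> (nat \<Rightarrow> bool) \<Rightarrow> (nat \<Rightarrow> bool) \<Rightarrow> complex" where
  "ev U A x z = (\<Prod>i\<in>A. U (z i) (x i))"

definition form :: "nat set \<Rightarrow> op \<Rightarrow> ((nat \<Rightarrow> bool) \<Rightarrow> complex) \<Rightarrow> ((nat \<Rightarrow> bool) \<Rightarrow> complex) \<Rightarrow> complex" where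
  "form A \<rho> v w = (\<Sum>z\<in>cfgs A. \<Sum>y\<in>cfgs A. cnj (v z) * \<rho> z y * w y)"

definition app :: "nat set \<Rightarrow> op \<Rightarrow> ((nat \<Rightarrow> bool) \<Rightarrow> complex) \<Rightarrow> (nat \<Rightarrow> bool) \<Rightarrow> complex" where
  "app A M v = (\<lambda>w. \<Sum>z\<in>cfgs A. M w z * v z)"

lemma cfgs_eq:
  assumes "w \<in> cfgs A" "z \<in> cfgs A"
  shows "(\<forall>i\<in>A. w i = z i) \<longleftrightarrow> w = z"
  using assms by (auto simp: cfgs_def fun_eq_iff)

lemma completeness:
  assumes fin: "finite A" and U3: "\<forall>a a'. U a False * cnj (U a' False) + U a True * cnj (U a' True) = (if a = a' then 1 else 0)"
    and w: "w \<in> cfgs A" and z: "z \<in> cfgs A"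
  shows "(\<Sum>x\<in>cfgs A. ev U A x w * cnj (ev U A x z)) = (if w = z then 1 else 0)"
proof -
  have "(\<Sum>x\<in>cfgs A. ev U A x w * cnj (ev U A x z)) = (\<Sum>x\<in>cfgs A. \<Prod>i\<in>A. U (w i) (x i) * cnj (U (z i) (x i)))"
    by (simp add: ev_def prod.distrib cnj_prod)
  also have "\<dots> = (\<Prod>i\<in>A. U (w i) False * cnj (U (z i) False) + U (w i) True * cnj (U (z i) True))"
    by (rule sum_prod_cfgs[OF fin])
  also have "\<dots> = (\<Prod>i\<in>A. (if w i = z i then 1 else 0))"
    using U3 by simp
  also have "\<dots> = (if (\<forall>i\<in>A. w i = z i) then 1 else 0)"
    using fin by (induction A rule: finite_induct) auto
  also have "\<dots> = (if w = z then 1 else 0)"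
    using cfgs_eq[OF w z] by simp
  finally show ?thesis .
qed

lemma trace_ev:
  assumes fin: "finite A" and U3: "\<forall>a a'. U a False * cnj (U a' False) + U a True * cnj (U a' True) = (if a = a' then 1 else 0)"
  shows "op_trace A (op_mult A \<rho> M) = (\<Sum>x\<in>cfgs A. form A \<rho> (ev U A x) (app A M (ev U A x)))"
proof -
  have fc: "finite (cfgs A)" using fin by (rule finite_cfgs)
  have e1: "form A \<rho> (ev U A x) (app A M (ev U A x))
      = (\<Sum>z\<in>cfgs A. \<Sum>y\<in>cfgs A. \<Sum>w\<in>cfgs A. \<rho> z y * M y w * (ev U A x w * cnj (ev U A x z)))" for x
    unfolding form_def app_def
  proof (intro sum.cong refl)
    fix z y
    show "cnj (ev U A x z) * \<rho> z y * (\<Sum>w\<in>cfgs A. M y w * ev U A x w) =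
         (\<Sum>w\<in>cfgs A. \<rho> z y * M y w * (ev U A x w * cnj (ev U A x z)))"
      unfolding sum_distrib_left by (intro sum.cong refl) (simp only: mult_ac)
  qed
  have "(\<Sum>x\<in>cfgs A. form A \<rho> (ev U A x) (app A M (ev U A x)))
      = (\<Sum>x\<in>cfgs A. \<Sum>z\<in>cfgs A. \<Sum>y\<in>cfgs A. \<Sum>w\<in>cfgs A. \<rho> z y * M y w * (ev U A x w * cnj (ev U A x z)))"
    using e1 by simp
  also have "\<dots> = (\<Sum>z\<in>cfgs A. \<Sum>x\<in>cfgs A. \<Sum>y\<in>cfgs A. \<Sum>w\<in>cfgs A. \<rho> z y * M y w * (ev U A x w * cnj (ev U A x z)))"
    by (rule sum.swap)
  also have "\<dots> = (\<Sum>z\<in>cfgs A. \<Sum>y\<in>cfgs A. \<Sum>x\<in>cfgs A. \<Sum>w\<in>cfgs A. \<rho> z y * M y w * (ev U A x w * cnj (ev U A x z)))"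
    by (intro sum.cong refl sum.swap)
  also have "\<dots> = (\<Sum>z\<in>cfgs A. \<Sum>y\<in>cfgs A. \<Sum>w\<in>cfgs A. \<Sum>x\<in>cfgs A. \<rho> z y * M y w * (ev U A x w * cnj (ev U A x z)))"
    by (intro sum.cong refl sum.swap)
  also have "\<dots> = (\<Sum>z\<in>cfgs A. \<Sum>y\<in>cfgs A. \<Sum>w\<in>cfgs A. \<rho> z y * M y w * (if w = z then 1 else 0))"
  proof (intro sum.cong refl)
    fix z y w assume "z \<in> cfgs A" "w \<in> cfgs A"
    then show "(\<Sum>x\<in>cfgs A. \<rho> z y * M y w * (ev U A x w * cnj (ev U A x z))) = \<rho> z y * M y w * (if w = z then 1 else 0)"
      unfolding sum_distrib_left[symmetric] using completeness[OF fin U3] by simp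
  qed
  also have "\<dots> = (\<Sum>z\<in>cfgs A. \<Sum>y\<in>cfgs A. \<rho> z y * M y z)"
  proof (intro sum.cong refl)
    fix z y assume "z \<in> cfgs A"
    show "(\<Sum>w\<in>cfgs A. \<rho> z y * M y w * (if w = z then 1 else 0)) = \<rho> z y * M y z"
      using fc \<open>z \<in> cfgs A\<close> by (simp add: if_distrib[of "\<lambda>t. _ * t"] sum.delta' cong: if_cong)
  qed
  also have "\<dots> = op_trace A (op_mult A \<rho> M)"
    by (simp add: op_trace_def op_mult_def)
  finally show ?thesis by simp
qed

definition Jb :: "nat set \<Rightarrow> real^3 \<Rightarrow> op" where
  "Jb A n = (\<lambda>x y. (1/2) * (\<Sum>i\<in>A.
      pauli_n n (x i) (y i) * (if (\<forall>j\<in>A. j \<noteq> i \<longrightarrow> x j = y j) then 1 else 0)))"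

lemma J_op_Jb: "J_op N n = Jb {1..N} n"
  by (simp add: J_op_def Jb_def)

definition flip :: "nat \<Rightarrow> (nat \<Rightarrow> bool) \<Rightarrow> (nat \<Rightarrow> bool)" where
  "flip i x = x(i := \<not> x i)"

lemma collapse:
  fixes g :: "(nat \<Rightarrow> bool) \<Rightarrow> complex"
  assumes fin: "finite A" and i: "i \<in> A" and w: "w \<in> cfgs A"
  shows "(\<Sum>z\<in>cfgs A. (if (\<forall>j\<in>A. j \<noteq> i \<longrightarrow> w j = z j) then 1 else 0) * g z)
       = g (w(i := False)) + g (w(i := True))"
proof -
  have fc: "finite (cfgs A)" using fin by (rule finite_cfgs)
  have S: "{z \<in> cfgs A. \<forall>j\<in>A. j \<noteq> i \<longrightarrow> w j = z j} = {w(i := False), w(i := True)}"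
  proof
    show "{z \<in> cfgs A. \<forall>j\<in>A. j \<noteq> i \<longrightarrow> w j = z j} \<subseteq> {w(i := False), w(i := True)}"
    proof
      fix z assume z: "z \<in> {z \<in> cfgs A. \<forall>j\<in>A. j \<noteq> i \<longrightarrow> w j = z j}"
      have "z = w(i := z i)"
      proof
        fix j show "z j = (w(i := z i)) j"
          using z w unfolding cfgs_def by (cases "j = i"; cases "j \<in> A") auto
      qed
      then show "z \<in> {w(i := False), w(i := True)}" by (cases "z i") auto
    qed
    show "{w(i := False), w(i := True)} \<subseteq> {z \<in> cfgs A. \<forall>j\<in>A. j \<noteq> i \<longrightarrow> w j = z j}"
      using w i unfolding cfgs_def by auto
  qed
  have "(\<Sum>z\<in>cfgs A. (if (\<forall>j\<in>A. j \<noteq> i \<longrightarrow> w j = z j) then 1 else 0) * g z)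
      = (\<Sum>z\<in>cfgs A. if (\<forall>j\<in>A. j \<noteq> i \<longrightarrow> w j = z j) then g z else 0)"
    by (intro sum.cong refl) auto
  also have "\<dots> = (\<Sum>z\<in>{z \<in> cfgs A. \<forall>j\<in>A. j \<noteq> i \<longrightarrow> w j = z j}. g z)"
    by (rule sum.inter_filter[OF fc, symmetric])
  also have "\<dots> = g (w(i := False)) + g (w(i := True))"
    unfolding S by (subst sum.insert) (auto simp: fun_eq_iff)
  finally show ?thesis .
qed

lemma ev_upd:
  assumes fin: "finite A" and i: "i \<in> A"
  shows "ev U A x (w(i := b)) = U b (x i) * (\<Prod>j\<in>A - {i}. U (w j) (x j))"
proof -
  have "ev U A x (w(i := b)) = U ((w(i := b)) i) (x i) * (\<Prod>j\<in>A - {i}. U ((w(i := b)) j) (x j))"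
    unfolding ev_def by (rule prod.remove[OF fin i])
  also have "(\<Prod>j\<in>A - {i}. U ((w(i := b)) j) (x j)) = (\<Prod>j\<in>A - {i}. U (w j) (x j))"
    by (intro prod.cong refl) auto
  finally show ?thesis by (simp only: fun_upd_same)
qed

lemma ev_split:
  assumes fin: "finite A" and i: "i \<in> A"
  shows "ev U A x w = U (w i) (x i) * (\<Prod>j\<in>A - {i}. U (w j) (x j))"
  using ev_upd[OF fin i, of U x w "w i"] by simp

lemma ev_flip:
  assumes fin: "finite A" and i: "i \<in> A"
  shows "ev U A (flip i x) w = U (w i) (\<not> x i) * (\<Prod>j\<in>A - {i}. U (w j) (x j))"
proof -
  have "ev U A (flip i x) w = U (w i) (flip i x i) * (\<Prod>j\<in>A - {i}. U (w j) (flip i x j))"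
    using ev_split[OF fin i] by blast
  also have "(\<Prod>j\<in>A - {i}. U (w j) (flip i x j)) = (\<Prod>j\<in>A - {i}. U (w j) (x j))"
    by (intro prod.cong refl) (auto simp: flip_def)
  finally show ?thesis by (simp only: flip_def fun_upd_same)
qed

lemma app_Jb:
  assumes fin: "finite A" and w: "w \<in> cfgs A"
  shows "app A (Jb A n) (ev U A x) w = (1/2) * (\<Sum>i\<in>A.
     (pauli_n n (w i) False * U False (x i) + pauli_n n (w i) True * U True (x i)) * (\<Prod>j\<in>A - {i}. U (w j) (x j)))"
proof -
  have "app A (Jb A n) (ev U A x) w = (\<Sum>z\<in>cfgs A. (1/2) * (\<Sum>i\<in>A.
      pauli_n n (w i) (z i) * (if (\<forall>j\<in>A. j \<noteq> i \<longrightarrow> w j = z j) then 1 else 0)) * ev U A x z)"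
    by (simp add: app_def Jb_def)
  also have "\<dots> = (1/2) * (\<Sum>i\<in>A. \<Sum>z\<in>cfgs A. (if (\<forall>j\<in>A. j \<noteq> i \<longrightarrow> w j = z j) then 1 else 0) * (pauli_n n (w i) (z i) * ev U A x z))"
    by (simp add: sum_distrib_left sum_distrib_right sum.swap[of _ "cfgs A"] mult_ac)
  also have "\<dots> = (1/2) * (\<Sum>i\<in>A. pauli_n n (w i) False * ev U A x (w(i := False)) + pauli_n n (w i) True * ev U A x (w(i := True)))"
  proof -
    have "(\<Sum>z\<in>cfgs A. (if (\<forall>j\<in>A. j \<noteq> i \<longrightarrow> w j = z j) then 1 else 0) * (pauli_n n (w i) (z i) * ev U A x z))
        = pauli_n n (w i) False * ev U A x (w(i := False)) + pauli_n n (w i) True * ev U A x (w(i := True))" if "i \<in> A" for i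
      using collapse[OF fin that w, of "\<lambda>z. pauli_n n (w i) (z i) * ev U A x z"] by simp
    then show ?thesis by simp
  qed
  also have "\<dots> = (1/2) * (\<Sum>i\<in>A.
     (pauli_n n (w i) False * U False (x i) + pauli_n n (w i) True * U True (x i)) * (\<Prod>j\<in>A - {i}. U (w j) (x j)))"
    using ev_upd[OF fin] by (simp add: algebra_simps)
  finally show ?thesis .
qed

definition Dc :: "nat set \<Rightarrow> (nat \<Rightarrow> bool) \<Rightarrow> complex" where
  "Dc A x = (1/2) * (\<Sum>i\<in>A. sg (x i))"

lemma app_Jn:
  assumes fin: "finite A" and w: "w \<in> cfgs A"
    and U1: "\<forall>a b. pauli_n n a False * U False b + pauli_n n a True * U True b = sg b * U a b"
  shows "app A (Jb A n) (ev U A x) w = Dc A x * ev U A x w"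
proof -
  have "app A (Jb A n) (ev U A x) w = (1/2) * (\<Sum>i\<in>A. sg (x i) * ev U A x w)"
    unfolding app_Jb[OF fin w]
  proof (intro arg_cong[where f="\<lambda>t. (1/2) * t"] sum.cong refl)
    fix i assume i: "i \<in> A"
    show "(pauli_n n (w i) False * U False (x i) + pauli_n n (w i) True * U True (x i)) * (\<Prod>j\<in>A - {i}. U (w j) (x j))
        = sg (x i) * ev U A x w"
      using U1 unfolding ev_split[OF fin i] by (simp add: mult_ac)
  qed
  then show ?thesis by (simp add: Dc_def sum_distrib_right)
qed

lemma app_Jm:
  assumes fin: "finite A" and w: "w \<in> cfgs A"
    and U2: "\<forall>a b. pauli_n m a False * U False b + pauli_n m a True * U True b = U a (\<not> b)"
  shows "app A (Jb A m) (ev U A x) w = (1/2) * (\<Sum>i\<in>A. ev U A (flip i x) w)"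
  unfolding app_Jb[OF fin w]
proof (intro arg_cong[where f="\<lambda>t. (1/2) * t"] sum.cong refl)
  fix i assume i: "i \<in> A"
  show "(pauli_n m (w i) False * U False (x i) + pauli_n m (w i) True * U True (x i)) * (\<Prod>j\<in>A - {i}. U (w j) (x j))
      = ev U A (flip i x) w"
    using U2 unfolding ev_flip[OF fin i] by simp
qed

lemma app_mult:
  assumes fin: "finite A"
  shows "app A (op_mult A M M') v w = app A M (app A M' v) w"
proof -
  have "app A (op_mult A M M') v w = (\<Sum>z\<in>cfgs A. \<Sum>y\<in>cfgs A. M w y * (M' y z * v z))"
    unfolding app_def op_mult_def by (simp add: sum_distrib_right sum_distrib_left mult_ac)
  also have "\<dots> = (\<Sum>y\<in>cfgs A. \<Sum>z\<in>cfgs A. M w y * (M' y z * v z))"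
    by (rule sum.swap)
  also have "\<dots> = app A M (app A M' v) w"
    unfolding app_def by (simp add: sum_distrib_left)
  finally show ?thesis .
qed

lemma form_cong:
  assumes "\<forall>w\<in>cfgs A. f w = g w"
  shows "form A \<rho> v f = form A \<rho> v g"
  unfolding form_def using assms by (intro sum.cong refl) simp

lemma form_scale:
  "form A \<rho> v (\<lambda>w. c * f w) = c * form A \<rho> v f"
  unfolding form_def by (simp add: sum_distrib_left mult_ac)

lemma form_sum:
  assumes "finite I"
  shows "form A \<rho> v (\<lambda>w. \<Sum>i\<in>I. f i w) = (\<Sum>i\<in>I. form A \<rho> v (f i))"
  unfolding form_def by (simp add: sum_distrib_left sum.swap[of _ I])

lemma app_JJ:
  assumes fin: "finite A" and w: "w \<in> cfgs A"
    and U1: "\<forall>a b. pauli_n n a False * U False b + pauli_n n a True * U True b = sg b * U a b"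
  shows "app A (op_mult A (Jb A n) (Jb A n)) (ev U A x) w = Dc A x * Dc A x * ev U A x w"
proof -
  have "app A (op_mult A (Jb A n) (Jb A n)) (ev U A x) w = app A (Jb A n) (app A (Jb A n) (ev U A x)) w"
    by (rule app_mult[OF fin])
  also have "\<dots> = (\<Sum>z\<in>cfgs A. Jb A n w z * (Dc A x * ev U A x z))"
    unfolding app_def using app_Jn[OF fin _ U1] by (intro sum.cong refl) (simp add: app_def)
  also have "\<dots> = Dc A x * app A (Jb A n) (ev U A x) w"
    by (simp add: app_def sum_distrib_left mult_ac)
  also have "\<dots> = Dc A x * Dc A x * ev U A x w"
    using app_Jn[OF fin w U1] by simp
  finally show ?thesis .
qed

lemma trace_facts:
  assumes fin: "finite A"
    and U1: "\<forall>a b. pauli_n n a False * U False b + pauli_n n a True * U True b = sg b * U a b"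
    and U2: "\<forall>a b. pauli_n m a False * U False b + pauli_n m a True * U True b = U a (\<not> b)"
    and U3: "\<forall>a a'. U a False * cnj (U a' False) + U a True * cnj (U a' True) = (if a = a' then 1 else 0)"
  shows "op_trace A (op_mult A \<rho> (Jb A n)) = (\<Sum>x\<in>cfgs A. Dc A x * form A \<rho> (ev U A x) (ev U A x))"
    and "op_trace A (op_mult A \<rho> (op_mult A (Jb A n) (Jb A n))) = (\<Sum>x\<in>cfgs A. Dc A x * Dc A x * form A \<rho> (ev U A x) (ev U A x))"
    and "op_trace A (op_mult A \<rho> (Jb A m)) = (\<Sum>x\<in>cfgs A. (1/2) * (\<Sum>i\<in>A. form A \<rho> (ev U A x) (ev U A (flip i x))))"
proof -
  show "op_trace A (op_mult A \<rho> (Jb A n)) = (\<Sum>x\<in>cfgs A. Dc A x * form A \<rho> (ev U A x) (ev U A x))"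
    unfolding trace_ev[OF fin U3]
  proof (intro sum.cong refl)
    fix x
    have "form A \<rho> (ev U A x) (app A (Jb A n) (ev U A x)) = form A \<rho> (ev U A x) (\<lambda>w. Dc A x * ev U A x w)"
      using app_Jn[OF fin _ U1] by (intro form_cong) simp
    then show "form A \<rho> (ev U A x) (app A (Jb A n) (ev U A x)) = Dc A x * form A \<rho> (ev U A x) (ev U A x)"
      by (simp add: form_scale)
  qed
  show "op_trace A (op_mult A \<rho> (op_mult A (Jb A n) (Jb A n))) = (\<Sum>x\<in>cfgs A. Dc A x * Dc A x * form A \<rho> (ev U A x) (ev U A x))"
    unfolding trace_ev[OF fin U3]
  proof (intro sum.cong refl)
    fix x
    have "form A \<rho> (ev U A x) (app A (op_mult A (Jb A n) (Jb A n)) (ev U A x)) = form A \<rho> (ev U A x) (\<lambda>w. (Dc A x * Dc A x) * ev U A x w)"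
      using app_JJ[OF fin _ U1] by (intro form_cong) simp
    then show "form A \<rho> (ev U A x) (app A (op_mult A (Jb A n) (Jb A n)) (ev U A x)) = Dc A x * Dc A x * form A \<rho> (ev U A x) (ev U A x)"
      by (simp add: form_scale)
  qed
  show "op_trace A (op_mult A \<rho> (Jb A m)) = (\<Sum>x\<in>cfgs A. (1/2) * (\<Sum>i\<in>A. form A \<rho> (ev U A x) (ev U A (flip i x))))"
    unfolding trace_ev[OF fin U3]
  proof (intro sum.cong refl)
    fix x
    have "form A \<rho> (ev U A x) (app A (Jb A m) (ev U A x)) = form A \<rho> (ev U A x) (\<lambda>w. (1/2) * (\<Sum>i\<in>A. ev U A (flip i x) w))"
      using app_Jm[OF fin _ U2] by (intro form_cong) simp
    then show "form A \<rho> (ev U A x) (app A (Jb A m) (ev U A x)) = (1/2) * (\<Sum>i\<in>A. form A \<rho> (ev U A x) (ev U A (flip i x)))"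
      by (simp only: form_scale form_sum[OF fin])
  qed
qed

lemma trace_one:
  assumes fin: "finite A"
    and U3: "\<forall>a a'. U a False * cnj (U a' False) + U a True * cnj (U a' True) = (if a = a' then 1 else 0)"
  shows "op_trace A \<rho> = (\<Sum>x\<in>cfgs A. form A \<rho> (ev U A x) (ev U A x))"
proof -
  let ?I = "\<lambda>w z. if w = z then 1 else (0::complex)"
  have fc: "finite (cfgs A)" using fin by (rule finite_cfgs)
  have "op_trace A \<rho> = op_trace A (op_mult A \<rho> ?I)"
    unfolding op_trace_def op_mult_def
  proof (intro sum.cong refl)
    fix x assume "x \<in> cfgs A"
    then show "\<rho> x x = (\<Sum>z\<in>cfgs A. \<rho> x z * (if z = x then 1 else 0))"
      using fc by (simp add: if_distrib[of "\<lambda>t. _ * t"] sum.delta' cong: if_cong)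
  qed
  also have "\<dots> = (\<Sum>x\<in>cfgs A. form A \<rho> (ev U A x) (app A ?I (ev U A x)))"
    by (rule trace_ev[OF fin U3])
  also have "\<dots> = (\<Sum>x\<in>cfgs A. form A \<rho> (ev U A x) (ev U A x))"
  proof (intro sum.cong refl form_cong ballI)
    fix x w assume "w \<in> cfgs A"
    then show "app A ?I (ev U A x) w = ev U A x w"
      using fc by (simp add: app_def if_distrib[of "\<lambda>t. t * _"] sum.delta cong: if_cong)
  qed
  finally show ?thesis .
qed

definition blocks :: "nat set \<Rightarrow> nat set set \<Rightarrow> bool" where
  "blocks A L \<longleftrightarrow> finite L \<and> (\<forall>B\<in>L. finite B) \<and> (\<forall>B\<in>L. \<forall>B'\<in>L. B \<noteq> B' \<longrightarrow> B \<inter> B' = {}) \<and> \<Union>L = A"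

lemma ev_blocks:
  assumes bl: "blocks A L"
  shows "ev U A x z = (\<Prod>B\<in>L. ev U B (restr B x) (restr B z))"
proof -
  have "ev U A x z = (\<Prod>i\<in>\<Union>L. U (z i) (x i))" using bl by (simp add: ev_def blocks_def)
  also have "\<dots> = (\<Prod>B\<in>L. \<Prod>i\<in>B. U (z i) (x i))"
    using prod.Union_disjoint[of L "\<lambda>i. U (z i) (x i)"] bl unfolding blocks_def by simp
  also have "\<dots> = (\<Prod>B\<in>L. ev U B (restr B x) (restr B z))"
    unfolding ev_def restr_def by (intro prod.cong refl) simp
  finally show ?thesis .
qed

lemma form_tensor:
  assumes bl: "blocks A L"
  shows "form A (tensor_prod L \<sigma>) (ev U A x) (ev U A y)
       = (\<Prod>B\<in>L. form B (\<sigma> B) (ev U B (restr B x)) (ev U B (restr B y)))"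
proof -
  have fL: "finite L" and fB: "\<forall>B\<in>L. finite B" and dj: "\<forall>B\<in>L. \<forall>B'\<in>L. B \<noteq> B' \<longrightarrow> B \<inter> B' = {}"
    and UA: "\<Union>L = A" using bl by (auto simp: blocks_def)
  define g where "g B z' w' = cnj (ev U B (restr B x) z') * \<sigma> B z' w' * ev U B (restr B y) w'" for B z' w'
  have "form A (tensor_prod L \<sigma>) (ev U A x) (ev U A y)
      = (\<Sum>z\<in>cfgs A. \<Sum>w\<in>cfgs A. \<Prod>B\<in>L. g B (restr B z) (restr B w))"
    unfolding form_def
  proof (intro sum.cong refl)
    fix z w
    show "cnj (ev U A x z) * tensor_prod L \<sigma> z w * ev U A y w = (\<Prod>B\<in>L. g B (restr B z) (restr B w))"
      unfolding ev_blocks[OF bl, of U x z] ev_blocks[OF bl, of U y w] tensor_prod_def g_def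
      by (simp add: cnj_prod prod.distrib)
  qed
  also have "\<dots> = (\<Sum>z\<in>cfgs A. \<Prod>B\<in>L. \<Sum>w'\<in>cfgs B. g B (restr B z) w')"
  proof (intro sum.cong refl)
    fix z
    show "(\<Sum>w\<in>cfgs A. \<Prod>B\<in>L. g B (restr B z) (restr B w)) = (\<Prod>B\<in>L. \<Sum>w'\<in>cfgs B. g B (restr B z) w')"
      using sum_prod_blocks[OF fL fB dj, of "\<lambda>B w'. g B (restr B z) w'"] UA by simp
  qed
  also have "\<dots> = (\<Prod>B\<in>L. \<Sum>z'\<in>cfgs B. \<Sum>w'\<in>cfgs B. g B z' w')"
    using sum_prod_blocks[OF fL fB dj, of "\<lambda>B z'. \<Sum>w'\<in>cfgs B. g B z' w'"] UA by simp
  also have "\<dots> = (\<Prod>B\<in>L. form B (\<sigma> B) (ev U B (restr B x)) (ev U B (restr B y)))"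
    unfolding form_def g_def by simp
  finally show ?thesis .
qed

definition sgr :: "bool \<Rightarrow> real" where "sgr b = (if b then -1 else 1)"

definition Dr :: "nat set \<Rightarrow> (nat \<Rightarrow> bool) \<Rightarrow> real" where
  "Dr A x = (1/2) * (\<Sum>i\<in>A. sgr (x i))"

lemma flip_cfgs: "i \<in> A \<Longrightarrow> x \<in> cfgs A \<Longrightarrow> flip i x \<in> cfgs A"
  by (auto simp: flip_def cfgs_def)

lemma flip_flip[simp]: "flip i (flip i x) = x"
  by (auto simp: flip_def)

lemma sum_flip:
  assumes "i \<in> A"
  shows "(\<Sum>x\<in>cfgs A. g (flip i x)) = (\<Sum>x\<in>cfgs A. g x)"
proof (rule sum.reindex_bij_witness[where i="flip i" and j="flip i"])
  show "\<And>a. a \<in> cfgs A \<Longrightarrow> flip i (flip i a) = a" by simp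
  show "\<And>a. a \<in> cfgs A \<Longrightarrow> flip i a \<in> cfgs A" using assms by (rule flip_cfgs)
  show "\<And>a. a \<in> cfgs A \<Longrightarrow> flip i (flip i a) = a" by simp
  show "\<And>a. a \<in> cfgs A \<Longrightarrow> flip i a \<in> cfgs A" using assms by (rule flip_cfgs)
  show "\<And>a. a \<in> cfgs A \<Longrightarrow> g (flip i a) = g (flip i a)" by simp
qed

lemma Dr_flip:
  assumes fin: "finite A" and i: "i \<in> A"
  shows "Dr A x - Dr A (flip i x) = sgr (x i)"
proof -
  have "(\<Sum>j\<in>A. sgr (x j)) = sgr (x i) + (\<Sum>j\<in>A - {i}. sgr (x j))"
    by (rule sum.remove[OF fin i])
  moreover have "(\<Sum>j\<in>A. sgr (flip i x j)) = sgr (flip i x i) + (\<Sum>j\<in>A - {i}. sgr (flip i x j))"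
    by (rule sum.remove[OF fin i])
  moreover have "(\<Sum>j\<in>A - {i}. sgr (flip i x j)) = (\<Sum>j\<in>A - {i}. sgr (x j))"
    by (intro sum.cong refl) (auto simp: flip_def)
  moreover have "sgr (flip i x i) = - sgr (x i)" by (simp add: flip_def sgr_def)
  ultimately show ?thesis unfolding Dr_def by (simp add: algebra_simps)
qed

lemma sgr_sq: "sgr b * sgr b = 1" by (simp add: sgr_def)

lemma count_bound:
  fixes y :: "nat \<Rightarrow> bool"
  assumes fin: "finite B"
  shows "(\<Sum>i\<in>B. \<Sum>j\<in>B. if j = i \<or> y i \<noteq> y j then 1 else (0::real)) \<le> real (card B) + real (card B)^2 / 2"
proof -
  define p where "p = card {j\<in>B. y j}"
  define q where "q = card {j\<in>B. \<not> y j}"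
  have pq: "p + q = card B"
  proof -
    have "card B = card ({j\<in>B. y j} \<union> {j\<in>B. \<not> y j})" by (rule arg_cong[where f=card]) auto
    also have "\<dots> = p + q" unfolding p_def q_def using fin by (subst card_Un_disjoint) auto
    finally show ?thesis by simp
  qed
  have inner: "(\<Sum>j\<in>B. if j = i \<or> y i \<noteq> y j then 1 else (0::real)) = 1 + (if y i then real q else real p)"
    if i: "i \<in> B" for i
  proof -
    have "(\<Sum>j\<in>B. if j = i \<or> y i \<noteq> y j then 1 else (0::real))
        = (\<Sum>j\<in>B. (if j = i then 1 else 0) + (if y i \<noteq> y j then 1 else (0::real)))"
      by (intro sum.cong refl) auto
    also have "\<dots> = 1 + (\<Sum>j\<in>B. if y i \<noteq> y j then 1 else (0::real))"
      using fin i by (simp add: sum.distrib)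
    also have "(\<Sum>j\<in>B. if y i \<noteq> y j then 1 else (0::real)) = real (card {j\<in>B. y i \<noteq> y j})"
      using fin by (simp add: sum.If_cases Int_def conj_commute)
    also have "{j\<in>B. y i \<noteq> y j} = (if y i then {j\<in>B. \<not> y j} else {j\<in>B. y j})"
      by auto
    finally show ?thesis by (simp add: p_def q_def)
  qed
  have "(\<Sum>i\<in>B. \<Sum>j\<in>B. if j = i \<or> y i \<noteq> y j then 1 else (0::real))
      = (\<Sum>i\<in>B. 1 + (if y i then real q else real p))"
    using inner by (intro sum.cong refl) auto
  also have "\<dots> = real (card B) + (\<Sum>i\<in>B. if y i then real q else real p)"
    by (simp add: sum.distrib)
  also have "(\<Sum>i\<in>B. if y i then real q else real p) = real p * real q + real q * real p"
  proof -
    have a: "B \<inter> Collect y = {j\<in>B. y j}" "B \<inter> - Collect y = {j\<in>B. \<not> y j}" by auto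
    show ?thesis using fin by (simp add: sum.If_cases p_def q_def a)
  qed
  finally have eq: "(\<Sum>i\<in>B. \<Sum>j\<in>B. if j = i \<or> y i \<noteq> y j then 1 else (0::real)) = real (card B) + 2 * real p * real q"
    by simp
  have "2 * real p * real q \<le> real (card B)^2 / 2"
  proof -
    have "0 \<le> (real p - real q)^2" by simp
    then show ?thesis unfolding pq[symmetric] by (simp add: power2_eq_square algebra_simps)
  qed
  then show ?thesis unfolding eq by simp
qed

lemma pair_bound:
  fixes a b :: real
  assumes "0 \<le> a" "0 \<le> b"
  shows "sgr s * a * (sgr t * b) \<le> (if s = t then (a^2 + b^2) / 2 else 0)"
proof (cases "s = t")
  case True
  have "0 \<le> (a - b)^2" by simp
  then have "a * b \<le> (a^2 + b^2) / 2" by (simp add: power2_eq_square algebra_simps)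
  then show ?thesis using True by (simp add: sgr_def)
next
  case False
  then have "sgr s * a * (sgr t * b) = - (a * b)" by (cases s; cases t) (auto simp: sgr_def)
  moreover have "0 \<le> a * b" using assms by simp
  ultimately show ?thesis using False by simp
qed

lemma blockbound:
  assumes fin: "finite A" and BA: "B \<subseteq> A" and u0: "\<forall>x\<in>cfgs A. 0 \<le> u x"
  shows "(\<Sum>x\<in>cfgs A. (\<Sum>i\<in>B. sgr (x i) * u (flip i x))^2)
       \<le> (real (card B) + real (card B)^2 / 2) * (\<Sum>x\<in>cfgs A. (u x)^2)"
proof -
  have finB: "finite B" using fin BA by (rule rev_finite_subset)
  have step1: "(\<Sum>i\<in>B. sgr (x i) * u (flip i x))^2
      \<le> (\<Sum>i\<in>B. \<Sum>j\<in>B. if x i = x j then ((u (flip i x))^2 + (u (flip j x))^2) / 2 else 0)"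
    if x: "x \<in> cfgs A" for x
  proof -
    have "(\<Sum>i\<in>B. sgr (x i) * u (flip i x))^2 = (\<Sum>i\<in>B. \<Sum>j\<in>B. sgr (x i) * u (flip i x) * (sgr (x j) * u (flip j x)))"
      by (simp add: power2_eq_square sum_product)
    also have "\<dots> \<le> (\<Sum>i\<in>B. \<Sum>j\<in>B. if x i = x j then ((u (flip i x))^2 + (u (flip j x))^2) / 2 else 0)"
    proof (intro sum_mono)
      fix i j assume "i \<in> B" "j \<in> B"
      then have "0 \<le> u (flip i x)" "0 \<le> u (flip j x)" using u0 flip_cfgs x BA by auto
      then show "sgr (x i) * u (flip i x) * (sgr (x j) * u (flip j x))
          \<le> (if x i = x j then ((u (flip i x))^2 + (u (flip j x))^2) / 2 else 0)"
        by (rule pair_bound)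
    qed
    finally show ?thesis .
  qed
  have sym: "(\<Sum>i\<in>B. \<Sum>j\<in>B. if x i = x j then ((u (flip i x))^2 + (u (flip j x))^2) / 2 else 0)
      = (\<Sum>i\<in>B. \<Sum>j\<in>B. if x i = x j then (u (flip i x))^2 else 0)" for x
  proof -
    have "(\<Sum>i\<in>B. \<Sum>j\<in>B. if x i = x j then ((u (flip i x))^2 + (u (flip j x))^2) / 2 else 0)
        = (\<Sum>i\<in>B. \<Sum>j\<in>B. (if x i = x j then (u (flip i x))^2 else 0) / 2 + (if x i = x j then (u (flip j x))^2 else 0) / 2)"
      by (intro sum.cong refl) (simp add: add_divide_distrib)
    also have "\<dots> = (\<Sum>i\<in>B. \<Sum>j\<in>B. (if x i = x j then (u (flip i x))^2 else 0)) / 2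
        + (\<Sum>i\<in>B. \<Sum>j\<in>B. (if x i = x j then (u (flip j x))^2 else 0)) / 2"
      by (simp add: sum.distrib sum_divide_distrib)
    also have "(\<Sum>i\<in>B. \<Sum>j\<in>B. (if x i = x j then (u (flip j x))^2 else 0))
        = (\<Sum>j\<in>B. \<Sum>i\<in>B. (if x i = x j then (u (flip j x))^2 else 0))"
      by (rule sum.swap)
    also have "\<dots> = (\<Sum>i\<in>B. \<Sum>j\<in>B. (if x i = x j then (u (flip i x))^2 else 0))"
      by (intro sum.cong refl) (auto)
    finally show ?thesis by simp
  qed
  have "(\<Sum>x\<in>cfgs A. (\<Sum>i\<in>B. sgr (x i) * u (flip i x))^2)
      \<le> (\<Sum>x\<in>cfgs A. \<Sum>i\<in>B. \<Sum>j\<in>B. if x i = x j then (u (flip i x))^2 else 0)"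
    using step1 sym by (intro sum_mono) simp
  also have "\<dots> = (\<Sum>i\<in>B. \<Sum>j\<in>B. \<Sum>x\<in>cfgs A. if x i = x j then (u (flip i x))^2 else 0)"
    by (simp add: sum.swap[of _ "cfgs A"])
  also have "\<dots> = (\<Sum>i\<in>B. \<Sum>j\<in>B. \<Sum>y\<in>cfgs A. if j = i \<or> y i \<noteq> y j then (u y)^2 else 0)"
  proof (rule sum.cong[OF refl], rule sum.cong[OF refl])
    fix i j assume i: "i \<in> B" and j: "j \<in> B"
    have "(\<Sum>x\<in>cfgs A. if x i = x j then (u (flip i x))^2 else 0)
        = (\<Sum>y\<in>cfgs A. if flip i y i = flip i y j then (u (flip i (flip i y)))^2 else 0)"
      using sum_flip[of i A "\<lambda>x. if x i = x j then (u (flip i x))^2 else 0"] i BA by auto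
    also have "\<dots> = (\<Sum>y\<in>cfgs A. if j = i \<or> y i \<noteq> y j then (u y)^2 else 0)"
      by (intro sum.cong refl) (simp only: flip_flip, auto simp: flip_def)
    finally show "(\<Sum>x\<in>cfgs A. if x i = x j then (u (flip i x))^2 else 0)
        = (\<Sum>y\<in>cfgs A. if j = i \<or> y i \<noteq> y j then (u y)^2 else 0)" .
  qed
  also have "\<dots> = (\<Sum>y\<in>cfgs A. (u y)^2 * (\<Sum>i\<in>B. \<Sum>j\<in>B. if j = i \<or> y i \<noteq> y j then 1 else 0))"
    by (simp add: sum_distrib_left sum.swap[of _ "cfgs A"] if_distrib[of "\<lambda>t. _ * t"] cong: if_cong)
  also have "\<dots> \<le> (\<Sum>y\<in>cfgs A. (u y)^2 * (real (card B) + real (card B)^2 / 2))"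
    by (intro sum_mono mult_left_mono count_bound[OF finB]) simp
  also have "\<dots> = (real (card B) + real (card B)^2 / 2) * (\<Sum>x\<in>cfgs A. (u x)^2)"
    by (simp add: sum_distrib_right mult.commute)
  finally show ?thesis .
qed

lemma flip_apply: "flip i x i = (\<not> x i)" by (simp add: flip_def)

lemma per_i:
  assumes fin: "finite A" and i: "i \<in> A"
  shows "(\<Sum>x\<in>cfgs A. u x * u (flip i x)) = 2 * (\<Sum>x\<in>cfgs A. sgr (x i) * (Dr A x - \<mu>) * u x * u (flip i x))"
proof -
  let ?T1 = "\<Sum>x\<in>cfgs A. sgr (x i) * (Dr A x - \<mu>) * u x * u (flip i x)"
  let ?T2 = "\<Sum>x\<in>cfgs A. sgr (x i) * (Dr A (flip i x) - \<mu>) * u x * u (flip i x)"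
  have "(\<Sum>x\<in>cfgs A. u x * u (flip i x)) = (\<Sum>x\<in>cfgs A. sgr (x i) * (Dr A x - \<mu>) * u x * u (flip i x) - sgr (x i) * (Dr A (flip i x) - \<mu>) * u x * u (flip i x))"
  proof (intro sum.cong refl)
    fix x
    have "sgr (x i) * (Dr A x - \<mu>) * u x * u (flip i x) - sgr (x i) * (Dr A (flip i x) - \<mu>) * u x * u (flip i x)
        = sgr (x i) * (Dr A x - Dr A (flip i x)) * u x * u (flip i x)" by (simp add: algebra_simps)
    also have "\<dots> = u x * u (flip i x)" unfolding Dr_flip[OF fin i] by (simp add: sgr_sq)
    finally show "u x * u (flip i x) = sgr (x i) * (Dr A x - \<mu>) * u x * u (flip i x) - sgr (x i) * (Dr A (flip i x) - \<mu>) * u x * u (flip i x)" by simp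
  qed
  also have "\<dots> = ?T1 - ?T2" by (simp add: sum_subtractf)
  also have "?T2 = - ?T1"
  proof -
    let ?h = "\<lambda>y. sgr (\<not> y i) * (Dr A y - \<mu>) * u (flip i y) * u y"
    have "?T2 = (\<Sum>x\<in>cfgs A. ?h (flip i x))"
      by (intro sum.cong refl) (simp add: flip_apply)
    also have "\<dots> = (\<Sum>x\<in>cfgs A. ?h x)" by (rule sum_flip[OF i])
    also have "\<dots> = (\<Sum>x\<in>cfgs A. - (sgr (x i) * (Dr A x - \<mu>) * u x * u (flip i x)))"
      by (intro sum.cong refl) (simp add: sgr_def algebra_simps)
    also have "\<dots> = - ?T1"
      by (simp add: sum_negf)
    finally show ?thesis .
  qed
  finally show ?thesis by simp
qed

lemma scalar_main:
  assumes fin: "finite A" and bl: "blocks A L" and u0: "\<forall>x\<in>cfgs A. 0 \<le> u x"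
    and cross: "\<forall>i\<in>A. \<forall>j\<in>A. (\<forall>B\<in>L. \<not> (i \<in> B \<and> j \<in> B)) \<longrightarrow>
        (\<Sum>x\<in>cfgs A. sgr (x i) * u (flip i x) * (sgr (x j) * u (flip j x))) = 0"
    and lam: "0 \<le> lam"
  shows "lam / 2 * (\<Sum>x\<in>cfgs A. \<Sum>i\<in>A. u x * u (flip i x))
     \<le> (\<Sum>x\<in>cfgs A. (Dr A x - \<mu>)^2 * (u x)^2)
        + lam^2 * (\<Sum>B\<in>L. real (card B) * (real (card B) + 2) / 8) * (\<Sum>x\<in>cfgs A. (u x)^2)"
proof -
  have fL: "finite L" and fB: "\<forall>B\<in>L. finite B" and dj: "\<forall>B\<in>L. \<forall>B'\<in>L. B \<noteq> B' \<longrightarrow> B \<inter> B' = {}"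
    and UA: "\<Union>L = A" using bl by (auto simp: blocks_def)
  define w where "w x = (\<Sum>i\<in>A. sgr (x i) * u (flip i x))" for x
  define wB where "wB B x = (\<Sum>i\<in>B. sgr (x i) * u (flip i x))" for B x
  have a: "(\<Sum>x\<in>cfgs A. \<Sum>i\<in>A. u x * u (flip i x)) = 2 * (\<Sum>x\<in>cfgs A. (Dr A x - \<mu>) * u x * w x)"
  proof -
    have "(\<Sum>x\<in>cfgs A. \<Sum>i\<in>A. u x * u (flip i x)) = (\<Sum>i\<in>A. \<Sum>x\<in>cfgs A. u x * u (flip i x))"
      by (rule sum.swap)
    also have "\<dots> = (\<Sum>i\<in>A. 2 * (\<Sum>x\<in>cfgs A. sgr (x i) * (Dr A x - \<mu>) * u x * u (flip i x)))"
      using per_i[OF fin] by (intro sum.cong refl) auto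
    also have "\<dots> = 2 * (\<Sum>x\<in>cfgs A. \<Sum>i\<in>A. sgr (x i) * (Dr A x - \<mu>) * u x * u (flip i x))"
      by (simp add: sum_distrib_left sum.swap[of _ A])
    also have "\<dots> = 2 * (\<Sum>x\<in>cfgs A. (Dr A x - \<mu>) * u x * w x)"
      unfolding w_def by (simp add: sum_distrib_left mult_ac)
    finally show ?thesis .
  qed
  have c: "lam * ((Dr A x - \<mu>) * u x * w x) \<le> (Dr A x - \<mu>)^2 * (u x)^2 + lam^2 * (w x)^2 / 4" for x
  proof -
    have "0 \<le> ((Dr A x - \<mu>) * u x - lam * w x / 2)^2" by simp
    then show ?thesis by (simp add: power2_eq_square algebra_simps)
  qed
  have wsplit: "w x = (\<Sum>B\<in>L. wB B x)" for x
    unfolding w_def wB_def UA[symmetric] using sum.Union_disjoint[OF fB dj] by simp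
  have off: "(\<Sum>x\<in>cfgs A. wB B x * wB B' x) = 0" if "B \<in> L" "B' \<in> L" "B \<noteq> B'" for B B'
  proof -
    have "(\<Sum>x\<in>cfgs A. wB B x * wB B' x) = (\<Sum>i\<in>B. \<Sum>j\<in>B'. \<Sum>x\<in>cfgs A. sgr (x i) * u (flip i x) * (sgr (x j) * u (flip j x)))"
      unfolding wB_def by (simp add: sum_product sum.swap[of _ "cfgs A"])
    also have "\<dots> = 0"
    proof (rule sum.neutral, rule ballI, rule sum.neutral, rule ballI)
      fix i j assume i: "i \<in> B" and j: "j \<in> B'"
      have iA: "i \<in> A" and jA: "j \<in> A" using i j that UA by auto
      have "\<forall>B''\<in>L. \<not> (i \<in> B'' \<and> j \<in> B'')"
      proof (intro ballI notI)
        fix B'' assume "B'' \<in> L" "i \<in> B'' \<and> j \<in> B''"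
        then have "B'' = B" "B'' = B'" using dj that i j by blast+
        then show False using that by simp
      qed
      then show "(\<Sum>x\<in>cfgs A. sgr (x i) * u (flip i x) * (sgr (x j) * u (flip j x))) = 0"
        using cross iA jA by blast
    qed
    finally show ?thesis .
  qed
  have d: "(\<Sum>x\<in>cfgs A. (w x)^2) = (\<Sum>B\<in>L. \<Sum>x\<in>cfgs A. (wB B x)^2)"
  proof -
    have "(\<Sum>x\<in>cfgs A. (w x)^2) = (\<Sum>x\<in>cfgs A. \<Sum>B\<in>L. \<Sum>B'\<in>L. wB B x * wB B' x)"
      unfolding wsplit by (simp add: power2_eq_square sum_product)
    also have "\<dots> = (\<Sum>B\<in>L. \<Sum>B'\<in>L. \<Sum>x\<in>cfgs A. wB B x * wB B' x)"
      by (simp add: sum.swap[of _ "cfgs A"])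
    also have "\<dots> = (\<Sum>B\<in>L. \<Sum>x\<in>cfgs A. wB B x * wB B x)"
    proof (rule sum.cong[OF refl])
      fix B assume B: "B \<in> L"
      have "(\<Sum>B'\<in>L. \<Sum>x\<in>cfgs A. wB B x * wB B' x) = (\<Sum>x\<in>cfgs A. wB B x * wB B x) + (\<Sum>B'\<in>L - {B}. \<Sum>x\<in>cfgs A. wB B x * wB B' x)"
        by (rule sum.remove[OF fL B])
      also have "(\<Sum>B'\<in>L - {B}. \<Sum>x\<in>cfgs A. wB B x * wB B' x) = 0"
      proof (rule sum.neutral, rule ballI)
        fix B' assume "B' \<in> L - {B}"
        then show "(\<Sum>x\<in>cfgs A. wB B x * wB B' x) = 0" using off B by auto
      qed
      finally show "(\<Sum>B'\<in>L. \<Sum>x\<in>cfgs A. wB B x * wB B' x) = (\<Sum>x\<in>cfgs A. wB B x * wB B x)" by simp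
    qed
    finally show ?thesis by (simp add: power2_eq_square)
  qed
  have d2: "(\<Sum>x\<in>cfgs A. (w x)^2) \<le> (\<Sum>B\<in>L. (real (card B) + real (card B)^2 / 2) * (\<Sum>x\<in>cfgs A. (u x)^2))"
    unfolding d
  proof (rule sum_mono)
    fix B assume B: "B \<in> L"
    have "B \<subseteq> A" using B UA by auto
    then show "(\<Sum>x\<in>cfgs A. (wB B x)^2) \<le> (real (card B) + real (card B)^2 / 2) * (\<Sum>x\<in>cfgs A. (u x)^2)"
      unfolding wB_def using blockbound[OF fin _ u0] by blast
  qed
  have "lam / 2 * (\<Sum>x\<in>cfgs A. \<Sum>i\<in>A. u x * u (flip i x)) = (\<Sum>x\<in>cfgs A. lam * ((Dr A x - \<mu>) * u x * w x))"
    unfolding a by (simp add: sum_distrib_left mult.assoc)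
  also have "\<dots> \<le> (\<Sum>x\<in>cfgs A. (Dr A x - \<mu>)^2 * (u x)^2 + lam^2 * (w x)^2 / 4)"
    by (rule sum_mono) (rule c)
  also have "\<dots> = (\<Sum>x\<in>cfgs A. (Dr A x - \<mu>)^2 * (u x)^2) + lam^2 / 4 * (\<Sum>x\<in>cfgs A. (w x)^2)"
    by (simp add: sum.distrib sum_distrib_left sum_divide_distrib)
  also have "\<dots> \<le> (\<Sum>x\<in>cfgs A. (Dr A x - \<mu>)^2 * (u x)^2) + lam^2 / 4 * (\<Sum>B\<in>L. (real (card B) + real (card B)^2 / 2) * (\<Sum>x\<in>cfgs A. (u x)^2))"
    using d2 by (intro add_left_mono mult_left_mono) auto
  also have "lam^2 / 4 * (\<Sum>B\<in>L. (real (card B) + real (card B)^2 / 2) * (\<Sum>x\<in>cfgs A. (u x)^2))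
      = lam^2 * (\<Sum>B\<in>L. real (card B) * (real (card B) + 2) / 8) * (\<Sum>x\<in>cfgs A. (u x)^2)"
  proof -
    let ?S = "\<Sum>x\<in>cfgs A. (u x)^2"
    have "(\<Sum>B\<in>L. (real (card B) + real (card B)^2 / 2) * ?S) = (\<Sum>B\<in>L. real (card B) * (real (card B) + 2) / 8 * (4 * ?S))"
      by (intro sum.cong refl) (simp add: power2_eq_square field_simps)
    also have "\<dots> = (\<Sum>B\<in>L. real (card B) * (real (card B) + 2) / 8) * (4 * ?S)"
      by (rule sum_distrib_right[symmetric])
    finally show ?thesis by simp
  qed
  finally show ?thesis by simp
qed

lemma form_herm:
  assumes st: "is_state B \<sigma>"
  shows "form B \<sigma> v w = cnj (form B \<sigma> w v)"
proof -
  have h: "\<forall>x\<in>cfgs B. \<forall>y\<in>cfgs B. \<sigma> x y = cnj (\<sigma> y x)" using st unfolding is_state_def by (elim conjE)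
  have "cnj (form B \<sigma> w v) = (\<Sum>z\<in>cfgs B. \<Sum>y\<in>cfgs B. w z * cnj (\<sigma> z y) * cnj (v y))"
    by (simp add: form_def)
  also have "\<dots> = (\<Sum>z\<in>cfgs B. \<Sum>y\<in>cfgs B. cnj (v y) * \<sigma> y z * w z)"
  proof (intro sum.cong refl)
    fix z y assume zB: "z \<in> cfgs B" and yB: "y \<in> cfgs B"
    have "\<sigma> y z = cnj (\<sigma> z y)" by (rule h[rule_format, OF yB zB])
    then have "cnj (\<sigma> z y) = \<sigma> y z" by simp
    then show "w z * cnj (\<sigma> z y) * cnj (v y) = cnj (v y) * \<sigma> y z * w z" by simp
  qed
  also have "\<dots> = form B \<sigma> v w" unfolding form_def by (rule sum.swap)
  finally show ?thesis by simp
qed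

lemma form_psd:
  assumes st: "is_state B \<sigma>"
  shows "0 \<le> Re (form B \<sigma> v v)"
proof -
  have "\<forall>v :: (nat \<Rightarrow> bool) \<Rightarrow> complex. 0 \<le> Re (\<Sum>x\<in>cfgs B. \<Sum>y\<in>cfgs B. cnj (v x) * \<sigma> x y * v y)"
    using st unfolding is_state_def by (elim conjE)
  then show ?thesis unfolding form_def by (rule spec)
qed

lemma form_real:
  assumes st: "is_state B \<sigma>"
  shows "form B \<sigma> v v = complex_of_real (Re (form B \<sigma> v v))"
proof -
  have "form B \<sigma> v v = cnj (form B \<sigma> v v)" by (rule form_herm[OF st])
  then have "Im (form B \<sigma> v v) = Im (cnj (form B \<sigma> v v))" by (rule arg_cong)
  then have "Im (form B \<sigma> v v) = - Im (form B \<sigma> v v)" by simp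
  then have "Im (form B \<sigma> v v) = 0" by simp
  then show ?thesis by (simp add: complex_eq_iff)
qed

lemma form_expand:
  "form B \<sigma> (\<lambda>z. v z + t * w z) (\<lambda>z. v z + t * w z)
   = form B \<sigma> v v + t * form B \<sigma> v w + cnj t * form B \<sigma> w v + cnj t * t * form B \<sigma> w w"
proof -
  have "cnj (v z + t * w z) * \<sigma> z y * (v y + t * w y)
      = cnj (v z) * \<sigma> z y * v y + t * (cnj (v z) * \<sigma> z y * w y) + cnj t * (cnj (w z) * \<sigma> z y * v y)
        + cnj t * t * (cnj (w z) * \<sigma> z y * w y)" for z y
    by (simp add: algebra_simps)
  then show ?thesis unfolding form_def by (simp add: sum.distrib sum_distrib_left)
qed

lemma nsq: "(complex_of_real (cmod z))^2 = z * cnj z"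
  by (metis complex_norm_square of_real_power)

lemma form_cs:
  assumes st: "is_state B \<sigma>"
  shows "(cmod (form B \<sigma> v w))^2 \<le> Re (form B \<sigma> v v) * Re (form B \<sigma> w w)"
proof -
  let ?b = "form B \<sigma> v w"
  let ?p = "Re (form B \<sigma> v v)" and ?q = "Re (form B \<sigma> w w)"
  let ?c = "(cmod ?b)^2"
  have p0: "0 \<le> ?p" and q0: "0 \<le> ?q" using form_psd[OF st] by auto
  have key: "0 \<le> ?p - 2 * r * ?c + r^2 * ?c * ?q" for r :: real
  proof -
    define t where "t = - (complex_of_real r * cnj ?b)"
    have wb: "form B \<sigma> w v = cnj ?b" by (rule form_herm[OF st])
    have "0 \<le> Re (form B \<sigma> (\<lambda>z. v z + t * w z) (\<lambda>z. v z + t * w z))" by (rule form_psd[OF st])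
    also have "form B \<sigma> (\<lambda>z. v z + t * w z) (\<lambda>z. v z + t * w z)
        = form B \<sigma> v v + t * ?b + cnj t * cnj ?b + cnj t * t * form B \<sigma> w w"
      unfolding form_expand wb ..
    also have "Re \<dots> = ?p - 2 * r * ?c + r^2 * ?c * ?q"
    proof -
      have "t * ?b = - complex_of_real (r * ?c)"
        unfolding t_def by (simp add: nsq mult_ac)
      moreover have "cnj t * cnj ?b = - complex_of_real (r * ?c)"
        unfolding t_def by (simp add: nsq mult_ac)
      moreover have "cnj t * t = complex_of_real (r^2 * ?c)"
        unfolding t_def by (simp add: nsq[unfolded power2_eq_square] mult_ac power2_eq_square)
      moreover have "form B \<sigma> w w = complex_of_real ?q" by (rule form_real[OF st])
      ultimately show ?thesis by (simp add: algebra_simps)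
    qed
    finally show ?thesis .
  qed
  show ?thesis
  proof (cases "?c = 0")
    case True
    then show ?thesis using p0 q0 by simp
  next
    case False
    then have c0: "?c > 0" by simp
    show ?thesis
    proof (cases "?q = 0")
      case True
      have "0 \<le> ?p - 2 * ((?p + 1) / (2 * ?c)) * ?c" using key[of "(?p + 1) / (2 * ?c)"] True by simp
      also have "\<dots> = -1" using c0 by (simp add: field_simps)
      finally show ?thesis by simp
    next
      case False
      then have qp: "?q > 0" using q0 by simp
      have "0 \<le> ?p - 2 * (1 / ?q) * ?c + (1 / ?q)^2 * ?c * ?q" by (rule key)
      also have "\<dots> = ?p - ?c / ?q" using qp by (simp add: field_simps power2_eq_square)
      finally have "?c / ?q \<le> ?p" by simp
      then show ?thesis using qp by (simp add: field_simps mult.commute)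
    qed
  qed
qed

context
  fixes A :: "nat set" and L :: "nat set set" and \<sigma> :: "nat set \<Rightarrow> op" and U :: "bool \<Rightarrow> bool \<Rightarrow> complex"
  assumes fin: "finite A" and bl: "blocks A L" and st: "\<forall>B\<in>L. is_state B (\<sigma> B)"
    and U3: "\<forall>a a'. U a False * cnj (U a' False) + U a True * cnj (U a' True) = (if a = a' then 1 else 0)"
begin

definition "RR B y y' = form B (\<sigma> B) (ev U B y) (ev U B y')"
definition "pB B y = Re (RR B y y)"
definition "uB B y = sqrt (pB B y)"
definition "uu x = (\<Prod>B\<in>L. uB B (restr B x))"

lemma fL: "finite L" and fB: "\<forall>B\<in>L. finite B"
  and dj: "\<forall>B\<in>L. \<forall>B'\<in>L. B \<noteq> B' \<longrightarrow> B \<inter> B' = {}" and UA: "\<Union>L = A"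
  using bl by (auto simp: blocks_def)

lemma pB_nonneg: "B \<in> L \<Longrightarrow> 0 \<le> pB B y"
  unfolding pB_def RR_def using form_psd st by blast

lemma RR_real: "B \<in> L \<Longrightarrow> RR B y y = complex_of_real (pB B y)"
  unfolding pB_def RR_def using form_real st by blast

lemma uu_nonneg: "0 \<le> uu x"
  unfolding uu_def uB_def using pB_nonneg by (intro prod_nonneg) simp

lemma uu_sq: "(uu x)^2 = (\<Prod>B\<in>L. pB B (restr B x))"
  unfolding uu_def prod_power_distrib uB_def
proof (intro prod.cong refl)
  fix B assume "B \<in> L"
  then show "(sqrt (pB B (restr B x)))^2 = pB B (restr B x)" using pB_nonneg[of B "restr B x"] by simp
qed

lemma formP_diag: "form A (tensor_prod L \<sigma>) (ev U A x) (ev U A x) = complex_of_real ((uu x)^2)"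
  unfolding form_tensor[OF bl] uu_sq of_real_prod using RR_real by (intro prod.cong refl) (simp add: RR_def)

lemma RR_cs: "B \<in> L \<Longrightarrow> cmod (RR B y y') \<le> uB B y * uB B y'"
proof -
  assume B: "B \<in> L"
  have "(cmod (RR B y y'))^2 \<le> pB B y * pB B y'"
    unfolding RR_def pB_def using form_cs st B by blast
  then have "sqrt ((cmod (RR B y y'))^2) \<le> sqrt (pB B y * pB B y')" by (rule real_sqrt_le_mono)
  then show ?thesis by (simp add: uB_def real_sqrt_mult)
qed

lemma formP_bound: "cmod (form A (tensor_prod L \<sigma>) (ev U A x) (ev U A x')) \<le> uu x * uu x'"
proof -
  have "cmod (form A (tensor_prod L \<sigma>) (ev U A x) (ev U A x')) = (\<Prod>B\<in>L. cmod (RR B (restr B x) (restr B x')))"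
    unfolding form_tensor[OF bl] prod_norm[symmetric] RR_def ..
  also have "\<dots> \<le> (\<Prod>B\<in>L. uB B (restr B x) * uB B (restr B x'))"
    using RR_cs by (intro prod_mono) auto
  also have "\<dots> = uu x * uu x'" unfolding uu_def by (rule prod.distrib)
  finally show ?thesis .
qed

lemma uu_sum: "(\<Sum>x\<in>cfgs A. (uu x)^2) = 1"
proof -
  have "(\<Sum>x\<in>cfgs A. (uu x)^2) = (\<Sum>x\<in>cfgs (\<Union>L). \<Prod>B\<in>L. pB B (restr B x))"
    unfolding uu_sq UA ..
  also have "\<dots> = (\<Prod>B\<in>L. \<Sum>y\<in>cfgs B. pB B y)"
    by (rule sum_prod_blocks[OF fL fB dj])
  also have "\<dots> = (\<Prod>B\<in>L. (1::real))"
  proof (intro prod.cong refl)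
    fix B assume B: "B \<in> L"
    have "op_trace B (\<sigma> B) = 1" using st B unfolding is_state_def by blast
    moreover have "op_trace B (\<sigma> B) = (\<Sum>y\<in>cfgs B. RR B y y)"
      unfolding RR_def using trace_one[OF _ U3] fB B by blast
    ultimately have "(\<Sum>y\<in>cfgs B. RR B y y) = 1" by simp
    then have "Re (\<Sum>y\<in>cfgs B. RR B y y) = 1" by simp
    then show "(\<Sum>y\<in>cfgs B. pB B y) = 1" unfolding pB_def by simp
  qed
  finally show ?thesis by simp
qed

lemma restr_flip: "restr B (flip i x) = (if i \<in> B then flip i (restr B x) else restr B x)"
  by (auto simp: restr_def flip_def fun_eq_iff)

lemma prod_one_block:
  assumes i: "i \<in> A"
  shows "(\<Prod>B\<in>L. if i \<in> B then c else 1) = (c::real)"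
proof -
  obtain Bi where Bi: "Bi \<in> L" "i \<in> Bi" using i UA by blast
  have "(\<Prod>B\<in>L. if i \<in> B then c else 1) = (if i \<in> Bi then c else 1) * (\<Prod>B\<in>L - {Bi}. if i \<in> B then c else 1)"
    by (rule prod.remove[OF fL Bi(1)])
  also have "(\<Prod>B\<in>L - {Bi}. if i \<in> B then c else 1) = (\<Prod>B\<in>L - {Bi}. 1)"
  proof (intro prod.cong refl)
    fix B assume B: "B \<in> L - {Bi}"
    then have "i \<notin> B" using dj Bi by blast
    then show "(if i \<in> B then c else 1) = 1" by simp
  qed
  finally show ?thesis using Bi by simp
qed

lemma flip_factor:
  assumes i: "i \<in> A"
  shows "sgr (x i) * uu (flip i x) = (\<Prod>B\<in>L. if i \<in> B then sgr (restr B x i) * uB B (flip i (restr B x)) else uB B (restr B x))"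
proof -
  have "(\<Prod>B\<in>L. if i \<in> B then sgr (restr B x i) * uB B (flip i (restr B x)) else uB B (restr B x))
      = (\<Prod>B\<in>L. (if i \<in> B then sgr (x i) else 1) * uB B (restr B (flip i x)))"
  proof (intro prod.cong refl)
    fix B assume "B \<in> L"
    show "(if i \<in> B then sgr (restr B x i) * uB B (flip i (restr B x)) else uB B (restr B x))
        = (if i \<in> B then sgr (x i) else 1) * uB B (restr B (flip i x))"
    proof (cases "i \<in> B")
      case True
      then have "restr B x i = x i" by (simp add: restr_def)
      then show ?thesis using True by (simp add: restr_flip)
    next
      case False
      then show ?thesis by (simp add: restr_flip)
    qed
  qed
  also have "\<dots> = (\<Prod>B\<in>L. if i \<in> B then sgr (x i) else 1) * uu (flip i x)"
    unfolding uu_def by (rule prod.distrib)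
  also have "\<dots> = sgr (x i) * uu (flip i x)" unfolding prod_one_block[OF i] ..
  finally show ?thesis by simp
qed

lemma block_antisym:
  assumes i: "i \<in> B"
  shows "(\<Sum>y\<in>cfgs B. sgr (y i) * uB B (flip i y) * uB B y) = 0"
proof -
  let ?S = "\<Sum>y\<in>cfgs B. sgr (y i) * uB B (flip i y) * uB B y"
  have "?S = (\<Sum>y\<in>cfgs B. sgr (flip i y i) * uB B (flip i (flip i y)) * uB B (flip i y))"
    by (rule sum_flip[OF i, symmetric])
  also have "\<dots> = (\<Sum>y\<in>cfgs B. - (sgr (y i) * uB B (flip i y) * uB B y))"
    by (intro sum.cong refl) (simp add: flip_apply sgr_def)
  also have "\<dots> = - ?S" by (simp add: sum_negf)
  finally show ?thesis by simp
qed

lemma uu_cross: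
  assumes i: "i \<in> A" and j: "j \<in> A" and nb: "\<forall>B\<in>L. \<not> (i \<in> B \<and> j \<in> B)"
  shows "(\<Sum>x\<in>cfgs A. sgr (x i) * uu (flip i x) * (sgr (x j) * uu (flip j x))) = 0"
proof -
  obtain Bi where Bi: "Bi \<in> L" "i \<in> Bi" using i UA by blast
  have jBi: "j \<notin> Bi" using nb Bi by blast
  define g where "g B y = (if i \<in> B then sgr (y i) * uB B (flip i y) else uB B y)
       * (if j \<in> B then sgr (y j) * uB B (flip j y) else uB B y)" for B y
  have "(\<Sum>x\<in>cfgs A. sgr (x i) * uu (flip i x) * (sgr (x j) * uu (flip j x)))
      = (\<Sum>x\<in>cfgs (\<Union>L). \<Prod>B\<in>L. g B (restr B x))"
    unfolding flip_factor[OF i] flip_factor[OF j] g_def UA prod.distrib ..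
  also have "\<dots> = (\<Prod>B\<in>L. \<Sum>y\<in>cfgs B. g B y)"
    by (rule sum_prod_blocks[OF fL fB dj])
  also have "\<dots> = 0"
  proof (rule prod_zero[OF fL], rule bexI[OF _ Bi(1)])
    show "(\<Sum>y\<in>cfgs Bi. g Bi y) = 0"
      unfolding g_def using Bi(2) jBi block_antisym[OF Bi(2)] by simp
  qed
  finally show ?thesis .
qed

lemma Dc_real: "Dc A' x = complex_of_real (Dr A' x)"
  by (simp add: Dc_def Dr_def sg_def sgr_def of_real_sum[symmetric] if_distrib cong: if_cong)

lemma product_ineq:
  assumes U1: "\<forall>a b. pauli_n n a False * U False b + pauli_n n a True * U True b = sg b * U a b"
    and U2: "\<forall>a b. pauli_n m a False * U False b + pauli_n m a True * U True b = U a (\<not> b)"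
    and C: "(\<Sum>B\<in>L. real (card B) * (real (card B) + 2) / 8) \<le> C"
  shows "0 \<le> Re (op_trace A (op_mult A (tensor_prod L \<sigma>) (op_mult A (Jb A n) (Jb A n))))
      - 2 * \<mu> * Re (op_trace A (op_mult A (tensor_prod L \<sigma>) (Jb A n)))
      + \<mu>^2 - lam * Re (op_trace A (op_mult A (tensor_prod L \<sigma>) (Jb A m))) + lam^2 * C"
proof -
  let ?P = "tensor_prod L \<sigma>"
  note tf = trace_facts[OF fin U1 U2 U3, of ?P]
  let ?E2 = "Re (op_trace A (op_mult A ?P (op_mult A (Jb A n) (Jb A n))))"
  let ?E1 = "Re (op_trace A (op_mult A ?P (Jb A n)))"
  let ?Em = "Re (op_trace A (op_mult A ?P (Jb A m)))"
  have E2: "?E2 = (\<Sum>x\<in>cfgs A. Dr A x * Dr A x * (uu x)^2)"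
  proof -
    have "op_trace A (op_mult A ?P (op_mult A (Jb A n) (Jb A n))) = (\<Sum>x\<in>cfgs A. complex_of_real (Dr A x * Dr A x * (uu x)^2))"
      unfolding tf(2) by (intro sum.cong refl) (simp add: Dc_real formP_diag)
    then show ?thesis by (simp only: of_real_sum[symmetric] Re_complex_of_real)
  qed
  have E1: "?E1 = (\<Sum>x\<in>cfgs A. Dr A x * (uu x)^2)"
  proof -
    have "op_trace A (op_mult A ?P (Jb A n)) = (\<Sum>x\<in>cfgs A. complex_of_real (Dr A x * (uu x)^2))"
      unfolding tf(1) by (intro sum.cong refl) (simp add: Dc_real formP_diag)
    then show ?thesis by (simp only: of_real_sum[symmetric] Re_complex_of_real)
  qed
  have Em: "\<bar>?Em\<bar> \<le> 1/2 * (\<Sum>x\<in>cfgs A. \<Sum>i\<in>A. uu x * uu (flip i x))"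
  proof -
    have "\<bar>?Em\<bar> \<le> cmod (op_trace A (op_mult A ?P (Jb A m)))" by (rule abs_Re_le_cmod)
    also have "\<dots> \<le> (\<Sum>x\<in>cfgs A. cmod ((1/2) * (\<Sum>i\<in>A. form A ?P (ev U A x) (ev U A (flip i x)))))"
      unfolding tf(3) by (rule norm_sum)
    also have "\<dots> \<le> (\<Sum>x\<in>cfgs A. 1/2 * (\<Sum>i\<in>A. uu x * uu (flip i x)))"
    proof (rule sum_mono)
      fix x
      have "cmod ((1/2) * (\<Sum>i\<in>A. form A ?P (ev U A x) (ev U A (flip i x))))
          = 1/2 * cmod (\<Sum>i\<in>A. form A ?P (ev U A x) (ev U A (flip i x)))"
        by (simp add: norm_mult)
      also have "\<dots> \<le> 1/2 * (\<Sum>i\<in>A. cmod (form A ?P (ev U A x) (ev U A (flip i x))))"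
        by (intro mult_left_mono norm_sum) simp
      also have "\<dots> \<le> 1/2 * (\<Sum>i\<in>A. uu x * uu (flip i x))"
        by (intro mult_left_mono sum_mono formP_bound) simp
      finally show "cmod ((1/2) * (\<Sum>i\<in>A. form A ?P (ev U A x) (ev U A (flip i x)))) \<le> 1/2 * (\<Sum>i\<in>A. uu x * uu (flip i x))" .
    qed
    also have "\<dots> = 1/2 * (\<Sum>x\<in>cfgs A. \<Sum>i\<in>A. uu x * uu (flip i x))"
      by (simp add: sum_distrib_left)
    finally show ?thesis .
  qed
  have V: "(\<Sum>x\<in>cfgs A. (Dr A x - \<mu>)^2 * (uu x)^2) = ?E2 - 2 * \<mu> * ?E1 + \<mu>^2"
  proof -
    have "(\<Sum>x\<in>cfgs A. (Dr A x - \<mu>)^2 * (uu x)^2)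
        = (\<Sum>x\<in>cfgs A. Dr A x * Dr A x * (uu x)^2 - 2 * \<mu> * (Dr A x * (uu x)^2) + \<mu>^2 * (uu x)^2)"
      by (intro sum.cong refl) (simp add: power2_eq_square algebra_simps)
    also have "\<dots> = ?E2 - 2 * \<mu> * ?E1 + \<mu>^2 * (\<Sum>x\<in>cfgs A. (uu x)^2)"
      unfolding E2 E1 by (simp add: sum.distrib sum_subtractf sum_distrib_left)
    finally show ?thesis using uu_sum by simp
  qed
  have sc: "\<bar>lam\<bar> / 2 * (\<Sum>x\<in>cfgs A. \<Sum>i\<in>A. uu x * uu (flip i x))
     \<le> (\<Sum>x\<in>cfgs A. (Dr A x - \<mu>)^2 * (uu x)^2)
        + \<bar>lam\<bar>^2 * (\<Sum>B\<in>L. real (card B) * (real (card B) + 2) / 8) * (\<Sum>x\<in>cfgs A. (uu x)^2)"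
    by (rule scalar_main[OF fin bl]) (auto simp: uu_nonneg uu_cross)
  have "lam * ?Em \<le> \<bar>lam\<bar> * \<bar>?Em\<bar>" by (simp add: abs_mult[symmetric])
  also have "\<dots> \<le> \<bar>lam\<bar> * (1/2 * (\<Sum>x\<in>cfgs A. \<Sum>i\<in>A. uu x * uu (flip i x)))"
    by (intro mult_left_mono Em) simp
  also have "\<dots> = \<bar>lam\<bar> / 2 * (\<Sum>x\<in>cfgs A. \<Sum>i\<in>A. uu x * uu (flip i x))" by simp
  also have "\<dots> \<le> ?E2 - 2 * \<mu> * ?E1 + \<mu>^2 + lam^2 * (\<Sum>B\<in>L. real (card B) * (real (card B) + 2) / 8)"
    using sc unfolding V uu_sum by simp
  also have "\<dots> \<le> ?E2 - 2 * \<mu> * ?E1 + \<mu>^2 + lam^2 * C"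
    using C by (intro add_left_mono mult_left_mono) auto
  finally show ?thesis by simp
qed

end

lemma arith_core:
  fixes F R X s k :: int
  assumes F0: "0 \<le> F" and R0: "0 \<le> R" and XFR: "X \<le> F * R" and XRR: "X \<le> R * R"
    and s: "2 * F + R + 1 \<le> s"
    and F0R: "F = 0 \<Longrightarrow> R = 0"
    and spec: "F = 1 \<Longrightarrow> R = 1 \<Longrightarrow> 5 \<le> s"
  shows "4 * F * F + 4 * X + 4 * F + 4 * R + 1 \<le> s * s"
proof -
  have s0: "0 \<le> 2 * F + R + 1" using F0 R0 by simp
  have s0': "0 \<le> s" using s s0 by simp
  have ss: "(2 * F + R + 1) * (2 * F + R + 1) \<le> s * s"
    using mult_mono[OF s s s0' s0] by simp
  have ex: "(2 * F + R + 1) * (2 * F + R + 1) = 4 * F * F + R * R + 1 + 4 * F * R + 4 * F + 2 * R"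
    by (simp add: algebra_simps)
  show ?thesis
  proof (cases "R = 1")
    case False
    have "0 \<le> R * (R - 2)"
    proof (cases "R = 0")
      case True then show ?thesis by simp
    next
      case False
      then have "2 \<le> R" using \<open>R \<noteq> 1\<close> R0 by simp
      then show ?thesis using R0 by simp
    qed
    then have "2 * R \<le> R * R" by (simp add: algebra_simps)
    then show ?thesis using ss ex XFR by linarith
  next
    case True
    then have X1: "X \<le> 1" using XRR by simp
    have "F \<noteq> 0" using F0R True by auto
    then have F1: "1 \<le> F" using F0 by simp
    show ?thesis
    proof (cases "F = 1")
      case True
      then have "5 \<le> s" using spec \<open>R = 1\<close> by simp
      then have "25 \<le> s * s" using mult_mono[of 5 s 5 s] by simp
      then show ?thesis using True \<open>R = 1\<close> X1 by simp
    next
      case False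
      then have "2 \<le> F" using F1 by simp
      then have "5 \<le> 4 * F" by simp
      have "2 * F + 2 \<le> s" using s True by simp
      have s2: "(2 * F + 2) * (2 * F + 2) \<le> s * s"
        using mult_mono[OF \<open>2 * F + 2 \<le> s\<close> \<open>2 * F + 2 \<le> s\<close>] F1 s0' by simp
      have "(2 * F + 2) * (2 * F + 2) = 4 * F * F + 8 * F + 4" by (simp add: algebra_simps)
      then show ?thesis using s2 True X1 \<open>5 \<le> 4 * F\<close> by linarith
    qed
  qed
qed

lemma comb:
  fixes L :: "nat set set" and N :: nat and r :: int
  assumes fL: "finite L" and ne: "L \<noteq> {}" and fB: "\<forall>B\<in>L. finite B" and nz: "\<forall>B\<in>L. B \<noteq> {}"
    and sumN: "(\<Sum>B\<in>L. card B) = N"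
    and dy: "int (Max (card ` L)) - int (card L) \<le> r" and r4: "r \<noteq> 4 - int N"
  shows "4 * (\<Sum>B\<in>L. int (card B) * int (card B)) \<le> (int N + r) * (int N + r) + 4 * int N - 1"
proof -
  define M where "M = Max (card ` L)"
  have "M \<in> card ` L" unfolding M_def using fL ne by (intro Max_in) auto
  then obtain B0 where B0: "B0 \<in> L" "card B0 = M" by auto
  have cle: "card B \<le> M" if "B \<in> L" for B
    unfolding M_def using fL that by (intro Max_ge) auto
  define e where "e B = int (card B) - 1" for B :: "nat set"
  have e0: "0 \<le> e B" if "B \<in> L" for B
  proof -
    have "card B \<noteq> 0" using fB nz that by auto
    then show ?thesis unfolding e_def by simp
  qed
  define F where "F = int M - 1"
  define k where "k = int (card L)"
  define L' where "L' = L - {B0}"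
  define R where "R = (\<Sum>B\<in>L'. e B)"
  define X where "X = (\<Sum>B\<in>L'. e B * e B)"
  have eF: "e B \<le> F" if "B \<in> L" for B unfolding e_def F_def using cle[OF that] by simp
  have fL': "finite L'" unfolding L'_def using fL by simp
  have sum_e: "(\<Sum>B\<in>L. e B) = F + R"
    unfolding R_def L'_def using sum.remove[OF fL B0(1), of e] B0(2) by (simp add: e_def F_def)
  have sum_e2: "(\<Sum>B\<in>L. e B) = int N - k"
  proof -
    have "(\<Sum>B\<in>L. e B) = (\<Sum>B\<in>L. int (card B)) - (\<Sum>B\<in>L. 1)" unfolding e_def by (rule sum_subtractf)
    also have "(\<Sum>B\<in>L. int (card B)) = int N" using sumN by (metis of_nat_sum)
    finally show ?thesis by (simp add: k_def)
  qed
  have sum_ee: "(\<Sum>B\<in>L. e B * e B) = F * F + X"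
    unfolding X_def L'_def using sum.remove[OF fL B0(1), of "\<lambda>B. e B * e B"] B0(2) by (simp add: e_def F_def)
  have sq: "(\<Sum>B\<in>L. int (card B) * int (card B)) = (\<Sum>B\<in>L. e B * e B) + 2 * (\<Sum>B\<in>L. e B) + k"
  proof -
    have "(\<Sum>B\<in>L. int (card B) * int (card B)) = (\<Sum>B\<in>L. e B * e B + 2 * e B + 1)"
      by (intro sum.cong refl) (simp add: e_def algebra_simps)
    also have "\<dots> = (\<Sum>B\<in>L. e B * e B) + 2 * (\<Sum>B\<in>L. e B) + k"
      by (simp add: sum.distrib sum_distrib_left k_def)
    finally show ?thesis .
  qed
  have L'L: "L' \<subseteq> L" unfolding L'_def by auto
  have F0: "0 \<le> F" using e0[OF B0(1)] B0(2) by (simp add: e_def F_def)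
  have R0: "0 \<le> R" unfolding R_def using e0 L'L by (intro sum_nonneg) auto
  have XFR: "X \<le> F * R"
  proof -
    have "X \<le> (\<Sum>B\<in>L'. F * e B)"
      unfolding X_def using e0 eF L'L by (intro sum_mono mult_right_mono) auto
    also have "\<dots> = F * R" unfolding R_def by (simp add: sum_distrib_left)
    finally show ?thesis .
  qed
  have XRR: "X \<le> R * R"
  proof -
    have eR: "e B \<le> R" if "B \<in> L'" for B
      unfolding R_def using fL' that e0 L'L by (intro member_le_sum) auto
    have "X \<le> (\<Sum>B\<in>L'. R * e B)"
      unfolding X_def using e0 eR L'L by (intro sum_mono mult_right_mono) auto
    also have "\<dots> = R * R" unfolding R_def by (simp add: sum_distrib_left)
    finally show ?thesis .
  qed
  define s where "s = int N + r"
  have Nk: "int N = F + R + k" using sum_e sum_e2 by simp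
  have hs: "2 * F + R + 1 \<le> s" using dy Nk unfolding s_def M_def[symmetric] F_def k_def by simp
  have F0R: "R = 0" if "F = 0"
  proof -
    have "R = (\<Sum>B\<in>L'. 0)" unfolding R_def using e0 eF that L'L
      by (intro sum.cong refl) (metis antisym subsetD)
    then show ?thesis by simp
  qed
  have spec: "5 \<le> s" if "F = 1" "R = 1"
  proof -
    have "int M - int (card L) = 4 - int N" using that Nk unfolding F_def k_def by simp
    then have "4 - int N \<le> r" using dy unfolding M_def by simp
    then have "5 - int N \<le> r" using r4 by simp
    then show ?thesis unfolding s_def by simp
  qed
  have core: "4 * F * F + 4 * X + 4 * F + 4 * R + 1 \<le> s * s"
    by (rule arith_core[OF F0 R0 XFR XRR hs F0R spec])
  show ?thesis unfolding sq sum_ee sum_e using core Nk unfolding s_def by simp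
qed

lemma partition_facts:
  assumes p: "is_partition N L" and N1: "N \<ge> 1"
  shows "blocks {1..N} L" "L \<noteq> {}" "\<forall>B\<in>L. B \<noteq> {}" "\<forall>B\<in>L. finite B" "finite L"
    "(\<Sum>B\<in>L. card B) = N"
proof -
  have po: "partition_on {1..N} L" using p by (simp add: is_partition_def)
  have U: "\<Union>L = {1..N}" using partition_onD1[OF po] by simp
  have dis: "disjoint L" using partition_onD2[OF po] .
  have nz: "{} \<notin> L" using partition_onD3[OF po] .
  show fB: "\<forall>B\<in>L. finite B"
  proof
    fix B assume "B \<in> L"
    then have "B \<subseteq> {1..N}" using U by auto
    then show "finite B" by (rule finite_subset) simp
  qed
  show fL: "finite L"
  proof -
    have "L \<subseteq> Pow {1..N}" using U by auto
    then show ?thesis by (rule finite_subset) simp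
  qed
  show "\<forall>B\<in>L. B \<noteq> {}" using nz by auto
  show "blocks {1..N} L"
    unfolding blocks_def using fL fB U disjointD[OF dis] by blast
  show "L \<noteq> {}" using U N1 by auto
  have "card (\<Union>L) = sum card L" using dis fB by (intro card_Union_disjoint) auto
  then show "(\<Sum>B\<in>L. card B) = N" using U by simp
qed

lemma Cbound:
  assumes p: "is_partition N L" and N1: "N \<ge> 1" and dy: "dyson_part L \<le> r" and r4: "r \<noteq> 4 - int N"
  shows "(\<Sum>B\<in>L. real (card B) * (real (card B) + 2) / 8) \<le> ((real N + of_int r)^2 + 12 * real N - 1) / 32"
proof -
  note pf = partition_facts[OF p N1]
  have c: "4 * (\<Sum>B\<in>L. int (card B) * int (card B)) \<le> (int N + r) * (int N + r) + 4 * int N - 1"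
    by (rule comb[OF pf(5) pf(2) pf(4) pf(3) pf(6) _ r4]) (use dy in \<open>simp add: dyson_part_def\<close>)
  then have c': "4 * (\<Sum>B\<in>L. real (card B) * real (card B)) \<le> (real N + of_int r) * (real N + of_int r) + 4 * real N - 1"
  proof -
    have "real_of_int (4 * (\<Sum>B\<in>L. int (card B) * int (card B))) \<le> real_of_int ((int N + r) * (int N + r) + 4 * int N - 1)"
      using c by (simp only: of_int_le_iff)
    then show ?thesis by simp
  qed
  have sN: "(\<Sum>B\<in>L. real (card B)) = real N" using pf(6) by (metis of_nat_sum)
  have "(\<Sum>B\<in>L. real (card B) * (real (card B) + 2) / 8) = ((\<Sum>B\<in>L. real (card B) * real (card B)) + 2 * (\<Sum>B\<in>L. real (card B))) / 8"
    by (simp add: sum_divide_distrib[symmetric] sum.distrib sum_distrib_left algebra_simps)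
  also have "\<dots> \<le> ((real N + of_int r)^2 + 12 * real N - 1) / 32"
    using c' sN by (simp add: power2_eq_square)
  finally show ?thesis .
qed

definition EE :: "nat set \<Rightarrow> op \<Rightarrow> op \<Rightarrow> real" where
  "EE A \<rho> M = Re (op_trace A (op_mult A \<rho> M))"

lemma EE_mix:
  assumes mix: "\<forall>x\<in>cfgs A. \<forall>y\<in>cfgs A. \<rho> x y = (\<Sum>k<K. complex_of_real (q k) * \<rho>s k x y)"
  shows "EE A \<rho> M = (\<Sum>k<K. q k * EE A (\<rho>s k) M)"
proof -
  have "op_trace A (op_mult A \<rho> M) = (\<Sum>x\<in>cfgs A. \<Sum>z\<in>cfgs A. (\<Sum>k<K. complex_of_real (q k) * \<rho>s k x z) * M z x)"
    unfolding op_trace_def op_mult_def using mix by (intro sum.cong refl) auto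
  also have "\<dots> = (\<Sum>k<K. complex_of_real (q k) * (\<Sum>x\<in>cfgs A. \<Sum>z\<in>cfgs A. \<rho>s k x z * M z x))"
    by (simp add: sum_distrib_left sum_distrib_right sum.swap[of _ "{..<K}"] mult_ac)
  also have "\<dots> = (\<Sum>k<K. complex_of_real (q k) * op_trace A (op_mult A (\<rho>s k) M))"
    by (simp add: op_trace_def op_mult_def)
  finally show ?thesis unfolding EE_def by (simp add: Re_sum)
qed

lemma mix_nonneg:
  assumes mix: "\<forall>x\<in>cfgs A. \<forall>y\<in>cfgs A. \<rho> x y = (\<Sum>k<K. complex_of_real (q k) * \<rho>s k x y)"
    and q0: "\<forall>k<K. 0 \<le> q k" and q1: "(\<Sum>k<K. q k) = 1"
    and each: "\<forall>k<K. 0 \<le> EE A (\<rho>s k) M2 - 2 * \<mu> * EE A (\<rho>s k) M1 + c - lam * EE A (\<rho>s k) Mm"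
  shows "0 \<le> EE A \<rho> M2 - 2 * \<mu> * EE A \<rho> M1 + c - lam * EE A \<rho> Mm"
proof -
  have cq: "(\<Sum>k<K. c * q k) = c" using q1 by (simp add: sum_distrib_left[symmetric])
  have "EE A \<rho> M2 - 2 * \<mu> * EE A \<rho> M1 + c - lam * EE A \<rho> Mm
      = (\<Sum>k<K. q k * (EE A (\<rho>s k) M2 - 2 * \<mu> * EE A (\<rho>s k) M1 + c - lam * EE A (\<rho>s k) Mm))"
    unfolding EE_mix[OF mix, of M2] EE_mix[OF mix, of M1] EE_mix[OF mix, of Mm]
    using cq by (simp add: algebra_simps sum.distrib sum_subtractf sum_distrib_left sum_distrib_right[symmetric])
  also have "\<dots> \<ge> 0" using q0 each by (intro sum_nonneg mult_nonneg_nonneg) auto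
  finally show ?thesis by simp
qed

theorem mainTheorem7:
  fixes N :: nat and r :: int and \<rho> :: op and n m :: "real^3"
  assumes "N \<ge> 1"
    and "- (int N - 1) \<le> r" and "r \<le> int N - 1"
    and "r \<noteq> int N - 2" and "r \<noteq> - (int N - 2)" and "r \<noteq> 4 - int N"
    and "dyson_rank_le N r \<rho>"
    and "norm n = 1" and "norm m = 1" and "n \<bullet> m = 0"
    and "expect N \<rho> (J_op N m) \<noteq> 0"
  shows "real N * variance N \<rho> (J_op N n) / (expect N \<rho> (J_op N m))^2
           \<ge> 8 * real N / ((real N + of_int r)^2 + 12 * real N - 1)"
proof -
  note N1 = assms(1) and r4 = assms(6) and dr = assms(7)
  obtain U where U1: "\<forall>a b. pauli_n n a False * U False b + pauli_n n a True * U True b = sg b * U a b"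
    and U2: "\<forall>a b. pauli_n m a False * U False b + pauli_n m a True * U True b = U a (\<not> b)"
    and U3: "\<forall>a a'. U a False * cnj (U a' False) + U a True * cnj (U a' True) = (if a = a' then 1 else 0)"
    using qubit_basis[OF assms(8,9,10)] by blast
  define A where "A = {1..N}"
  have finA: "finite A" unfolding A_def by simp
  define Q where "Q = (real N + of_int r)^2 + 12 * real N - 1"
  have Q0: "0 < Q"
  proof -
    have "1 \<le> real N" using N1 by simp
    moreover have "0 \<le> (real N + of_int r)^2" by simp
    ultimately show ?thesis unfolding Q_def by linarith
  qed
  define C where "C = Q / 32"
  let ?J2 = "op_mult A (Jb A n) (Jb A n)" and ?J1 = "Jb A n" and ?Jm = "Jb A m"
  have key: "0 \<le> EE A \<rho> ?J2 - 2 * \<mu> * EE A \<rho> ?J1 + (\<mu>^2 + lam^2 * C) - lam * EE A \<rho> ?Jm" for \<mu> lam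
  proof -
    obtain K :: nat and q \<Lambda> \<rho>s where q0: "\<forall>k<K. 0 \<le> q k" and q1: "(\<Sum>k<K. q k) = 1"
      and parts: "\<forall>k<K. is_partition N (\<Lambda> k) \<and> dyson_part (\<Lambda> k) \<le> r \<and> separable N (\<Lambda> k) (\<rho>s k)"
      and mix: "\<forall>x\<in>cfgs {1..N}. \<forall>y\<in>cfgs {1..N}. \<rho> x y = (\<Sum>k<K. complex_of_real (q k) * \<rho>s k x y)"
      using dr unfolding dyson_rank_le_def by blast
    show ?thesis
    proof (rule mix_nonneg[OF mix[folded A_def] q0 q1], intro allI impI)
      fix k assume k: "k < K"
      have pk: "is_partition N (\<Lambda> k)" and dk: "dyson_part (\<Lambda> k) \<le> r" and sk: "separable N (\<Lambda> k) (\<rho>s k)"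
        using parts k by auto
      obtain K' :: nat and p \<sigma> where p0: "\<forall>l<K'. 0 \<le> p l" and p1: "(\<Sum>l<K'. p l) = 1"
        and sts: "\<forall>l<K'. \<forall>B\<in>\<Lambda> k. is_state B (\<sigma> l B)"
        and mix2: "\<forall>x\<in>cfgs {1..N}. \<forall>y\<in>cfgs {1..N}. \<rho>s k x y = (\<Sum>l<K'. complex_of_real (p l) * tensor_prod (\<Lambda> k) (\<sigma> l) x y)"
        using sk unfolding separable_def by blast
      have bl: "blocks A (\<Lambda> k)" unfolding A_def using partition_facts(1)[OF pk N1] .
      have Cb: "(\<Sum>B\<in>\<Lambda> k. real (card B) * (real (card B) + 2) / 8) \<le> C"
        unfolding C_def Q_def by (rule Cbound[OF pk N1 dk r4])
      show "0 \<le> EE A (\<rho>s k) ?J2 - 2 * \<mu> * EE A (\<rho>s k) ?J1 + (\<mu>^2 + lam^2 * C) - lam * EE A (\<rho>s k) ?Jm"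
      proof (rule mix_nonneg[OF mix2[folded A_def] p0 p1], intro allI impI)
        fix l assume l: "l < K'"
        have st: "\<forall>B\<in>\<Lambda> k. is_state B (\<sigma> l B)" using sts l by auto
        have "0 \<le> Re (op_trace A (op_mult A (tensor_prod (\<Lambda> k) (\<sigma> l)) (op_mult A (Jb A n) (Jb A n))))
          - 2 * \<mu> * Re (op_trace A (op_mult A (tensor_prod (\<Lambda> k) (\<sigma> l)) (Jb A n)))
          + \<mu>^2 - lam * Re (op_trace A (op_mult A (tensor_prod (\<Lambda> k) (\<sigma> l)) (Jb A m))) + lam^2 * C"
          by (rule product_ineq[OF finA bl st U3 U1 U2 Cb])
        then show "0 \<le> EE A (tensor_prod (\<Lambda> k) (\<sigma> l)) ?J2 - 2 * \<mu> * EE A (tensor_prod (\<Lambda> k) (\<sigma> l)) ?J1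
            + (\<mu>^2 + lam^2 * C) - lam * EE A (tensor_prod (\<Lambda> k) (\<sigma> l)) ?Jm"
          unfolding EE_def by simp
      qed
    qed
  qed
  define a where "a = expect N \<rho> (J_op N m)"
  define \<mu> where "\<mu> = expect N \<rho> (J_op N n)"
  define V where "V = variance N \<rho> (J_op N n)"
  have a_eq: "a = EE A \<rho> ?Jm" unfolding a_def expect_def EE_def A_def J_op_Jb ..
  have mu_eq: "\<mu> = EE A \<rho> ?J1" unfolding \<mu>_def expect_def EE_def A_def J_op_Jb ..
  have V_eq: "V = EE A \<rho> ?J2 - \<mu>^2" unfolding V_def variance_def \<mu>_def expect_def EE_def A_def J_op_Jb ..
  have a0: "a \<noteq> 0" using assms(11) unfolding a_def .
  define lam where "lam = 16 * a / Q"
  have "0 \<le> EE A \<rho> ?J2 - 2 * \<mu> * EE A \<rho> ?J1 + (\<mu>^2 + lam^2 * C) - lam * EE A \<rho> ?Jm" by (rule key)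
  then have h0: "0 \<le> V + (lam^2 * C - lam * a)" unfolding V_eq a_eq mu_eq[symmetric] by (simp add: power2_eq_square)
  have h1: "lam^2 * C - lam * a = - (8 * a^2 / Q)" unfolding lam_def C_def using Q0
    by (simp add: power2_eq_square field_simps)
  have "8 * a^2 / Q \<le> V" using h0 h1 by simp
  then have VQ: "8 * a^2 \<le> V * Q" using Q0 by (simp add: divide_le_eq)
  have a2: "0 < a^2" using a0 by simp
  have "8 * real N * a^2 \<le> real N * V * Q" using mult_left_mono[OF VQ, of "real N"] by (simp add: mult_ac)
  then have "8 * real N / Q \<le> real N * V / a^2" using Q0 a2 by (simp add: field_simps)
  then show ?thesis unfolding V_def a_def Q_def .
qed

end
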